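(* Let $\mathcal{D}_0^\alpha=M(\mathcal{F}_i^\alpha)$. Then an element $(u,\rho,\nu,\mu)\in\mathcal{D}^\alpha$ belongs to $\mathcal{D}_0^\alpha$ if and only if $\nu=\mu$.
   Context: Fix $\alpha\in W^{1,\infty}(\mathbb{R})$ with either $0\le\alpha(x)<1$ for all $x$, or $\alpha\equiv1$. $\mathcal{D}^\alpha$ is the set of $(u,\rho,\nu,\mu)$ with (i) $u\in L^\infty(\mathbb{R})$, $u_x\in L^2(\mathbb{R})$; (ii) $\rho\in L^2(\mathbb{R})$; (iii) $\mu\le\nu$ positive finite Radon measures on $\mathbb{R}$; (iv) $\mu_{ac}=(u_x^2+\rho^2)dx$; (v) if $0\le\alpha<1$, then $\frac{d\mu}{d\nu}>0$ and $\frac{d\mu}{d\nu}(x)=1$ whenever $u_x(x)<0$ or $\rho(x)\ne0$; (vi) if $\alpha\equiv1$, then $\mu=\nu_{ac}$. $E_1=\{f\in L^\infty(\mathbb{R}): f'\in L^2,\ \lim_{x\to-\infty}f=0\}$, $E_2=\{f\in L^\infty: f'\in L^2\}$, norms $\|f\|_\infty+\|f'\|_2$; $B=E_2\times E_2\times E_1\times L^2(\mathbb{R})\times E_1$. $\mathcal{F}^\alpha$ is the set of $X=(y,U,H,r,V)$ with $(y-\mathrm{id},U,H,r,V)\in B$ and: (i) $y-\mathrm{id},U,H,V\in W^{1,\infty}$, $r\in L^\infty$; (ii) $y_\xi\ge0$, $H_\xi\ge0$, $y_\xi+H_\xi>c$ a.e. for some $c>0$; (iii) $y_\xi V_\xi=U_\xi^2+r^2$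 a.e.; (iv) $0\le V_\xi\le H_\xi$ a.e.; (v) if $0\le\alpha<1$, there is $\kappa:\mathbb{R}\to(0,1]$ with $V_\xi=\kappa(y)H_\xi$ a.e. and $\kappa(y(\xi))=1$ whenever $U_\xi(\xi)<0$ or $r(\xi)\ne0$; (vi) if $\alpha\equiv1$, a.e. $y_\xi=0\Rightarrow V_\xi=0$ and $y_\xi>0\Rightarrow V_\xi=H_\xi$. $\mathcal{F}_i^\alpha=\{X\in\mathcal{F}^\alpha:V=H\}$. $M:\mathcal{F}^\alpha\to\mathcal{D}^\alpha$, $M(y,U,H,r,V)=(u,\rho,\nu,\mu)$ with $u(x)=U(\xi)$ for any $\xi$ with $y(\xi)=x$, $\rho\,dx=y_\#(r\,d\xi)$, $\nu=y_\#(H_\xi\,d\xi)$, $\mu=y_\#(V_\xi\,d\xi)$. *)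

theory Defs
  imports "HOL-Analysis.Analysis"
begin

definition W1inf :: "(real \<Rightarrow> real) \<Rightarrow> bool" where
  "W1inf f \<longleftrightarrow> bounded (range f) \<and> (\<exists>L. L-lipschitz_on UNIV f)"

definition ess_bounded :: "(real \<Rightarrow> real) \<Rightarrow> bool" where
  "ess_bounded f \<longleftrightarrow> (\<exists>C. AE x in lborel. \<bar>f x\<bar> \<le> C)"

definition L2 :: "(real \<Rightarrow> real) \<Rightarrow> bool" where
  "L2 f \<longleftrightarrow> f \<in> borel_measurable borel \<and> integrable lborel (\<lambda>x. (f x)\<^sup>2)"

definition admissible_alpha :: "(real \<Rightarrow> real) \<Rightarrow> bool" where
  "admissible_alpha \<alpha> \<longleftrightarrow> W1inf \<alpha> \<and>
     ((\<forall>x. 0 \<le> \<alpha> x \<and> \<alpha> x < 1) \<or> (\<forall>x. \<alpha> x = 1))"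

definition alpha_lt1 :: "(real \<Rightarrow> real) \<Rightarrow> bool" where
  "alpha_lt1 \<alpha> \<longleftrightarrow> (\<forall>x. 0 \<le> \<alpha> x \<and> \<alpha> x < 1)"

definition alpha_eq1 :: "(real \<Rightarrow> real) \<Rightarrow> bool" where
  "alpha_eq1 \<alpha> \<longleftrightarrow> (\<forall>x. \<alpha> x = 1)"

definition fin_borel_measure :: "real measure \<Rightarrow> bool" where
  "fin_borel_measure m \<longleftrightarrow> sets m = sets borel \<and> finite_measure m"

text \<open>The absolutely continuous part (Lebesgue decomposition) of m is f dx:
  there is a Lebesgue-null Borel set N such that m restricted to the complement of N is f dx.\<close>
definition ac_part_density :: "real measure \<Rightarrow> (real \<Rightarrow> ennreal) \<Rightarrow> bool" where
  "ac_part_density m f \<longleftrightarrow> f \<in> borel_measurable borel \<and>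
     (\<exists>N\<in>sets borel. emeasure lborel N = 0 \<and>
        (\<forall>A\<in>sets borel. emeasure m (A - N) = (\<integral>\<^sup>+x. f x * indicator A x \<partial>lborel)))"

text \<open>u in L^infinity with u_x = ux in L^2 (u taken as its continuous, locally
  absolutely continuous representative).\<close>
definition has_L2_deriv :: "(real \<Rightarrow> real) \<Rightarrow> (real \<Rightarrow> real) \<Rightarrow> bool" where
  "has_L2_deriv u ux \<longleftrightarrow> L2 ux \<and>
     (\<forall>a b. a \<le> b \<longrightarrow> set_integrable lborel {a..b} ux \<and>
            u b - u a = (LINT x:{a..b}|lborel. ux x))"

definition D_set :: "(real \<Rightarrow> real) \<Rightarrow>
    ((real \<Rightarrow> real) \<times> (real \<Rightarrow> real) \<times> real measure \<times> real measure) set" where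
  "D_set \<alpha> = {(u, \<rho>, \<nu>, \<mu>). \<exists>ux.
      ess_bounded u \<and> has_L2_deriv u ux \<and>
      L2 \<rho> \<and>
      fin_borel_measure \<nu> \<and> fin_borel_measure \<mu> \<and>
      (\<forall>A\<in>sets borel. emeasure \<mu> A \<le> emeasure \<nu> A) \<and>
      ac_part_density \<mu> (\<lambda>x. ennreal ((ux x)\<^sup>2 + (\<rho> x)\<^sup>2)) \<and>
      (alpha_lt1 \<alpha> \<longrightarrow>
         (AE x in \<nu>. RN_deriv \<nu> \<mu> x > 0) \<and>
         (AE x in lborel. (ux x < 0 \<or> \<rho> x \<noteq> 0) \<longrightarrow> RN_deriv \<nu> \<mu> x = 1)) \<and>
      (alpha_eq1 \<alpha> \<longrightarrow>
         (\<exists>g. ac_part_density \<nu> g \<and> \<mu> = density lborel g))}"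

text \<open>Membership of f in E_2 (with f Lipschitz, f' = deriv f a.e.).\<close>
definition E2 :: "(real \<Rightarrow> real) \<Rightarrow> bool" where
  "E2 f \<longleftrightarrow> bounded (range f) \<and> L2 (deriv f)"

definition E1 :: "(real \<Rightarrow> real) \<Rightarrow> bool" where
  "E1 f \<longleftrightarrow> E2 f \<and> (f \<longlongrightarrow> 0) at_bot"

type_synonym lagr = "(real \<Rightarrow> real) \<times> (real \<Rightarrow> real) \<times> (real \<Rightarrow> real) \<times> (real \<Rightarrow> real) \<times> (real \<Rightarrow> real)"

definition F_set :: "(real \<Rightarrow> real) \<Rightarrow> lagr set" where
  "F_set \<alpha> = {(y, U, H, r, V).
      E2 (\<lambda>\<xi>. y \<xi> - \<xi>) \<and> E2 U \<and> E1 H \<and> L2 r \<and> E1 V \<and>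
      W1inf (\<lambda>\<xi>. y \<xi> - \<xi>) \<and> W1inf U \<and> W1inf H \<and> W1inf V \<and> ess_bounded r \<and>
      (AE \<xi> in lborel. deriv y \<xi> \<ge> 0 \<and> deriv H \<xi> \<ge> 0) \<and>
      (\<exists>c>0. AE \<xi> in lborel. deriv y \<xi> + deriv H \<xi> > c) \<and>
      (AE \<xi> in lborel. deriv y \<xi> * deriv V \<xi> = (deriv U \<xi>)\<^sup>2 + (r \<xi>)\<^sup>2) \<and>
      (AE \<xi> in lborel. 0 \<le> deriv V \<xi> \<and> deriv V \<xi> \<le> deriv H \<xi>) \<and>
      (alpha_lt1 \<alpha> \<longrightarrow> (\<exists>\<kappa>::real \<Rightarrow> real. (\<forall>x. 0 < \<kappa> x \<and> \<kappa> x \<le> 1) \<and>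
          (AE \<xi> in lborel. deriv V \<xi> = \<kappa> (y \<xi>) * deriv H \<xi> \<and>
                ((deriv U \<xi> < 0 \<or> r \<xi> \<noteq> 0) \<longrightarrow> \<kappa> (y \<xi>) = 1)))) \<and>
      (alpha_eq1 \<alpha> \<longrightarrow>
          (AE \<xi> in lborel. (deriv y \<xi> = 0 \<longrightarrow> deriv V \<xi> = 0) \<and>
                           (deriv y \<xi> > 0 \<longrightarrow> deriv V \<xi> = deriv H \<xi>)))}"

definition Fi_set :: "(real \<Rightarrow> real) \<Rightarrow> lagr set" where
  "Fi_set \<alpha> = {(y, U, H, r, V). (y, U, H, r, V) \<in> F_set \<alpha> \<and> V = H}"

text \<open>M(X) = (u, rho, nu, mu), as a relation since rho is determined only almost everywhere.\<close>
definition M_rel :: "lagr \<Rightarrow> (real \<Rightarrow> real) \<times> (real \<Rightarrow> real) \<times> real measure \<times> real measure \<Rightarrow> bool" where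
  "M_rel X D \<longleftrightarrow> (case X of (y, U, H, r, V) \<Rightarrow> case D of (u, \<rho>, \<nu>, \<mu>) \<Rightarrow>
      (\<forall>\<xi>. u (y \<xi>) = U \<xi>) \<and>
      (\<forall>A\<in>sets borel. bounded A \<longrightarrow>
          (LINT x:A|lborel. \<rho> x) = (LINT \<xi>:(y -` A)|lborel. r \<xi>)) \<and>
      \<nu> = distr (density lborel (\<lambda>\<xi>. ennreal (deriv H \<xi>))) lborel y \<and>
      \<mu> = distr (density lborel (\<lambda>\<xi>. ennreal (deriv V \<xi>))) lborel y)"

definition D0_set :: "(real \<Rightarrow> real) \<Rightarrow>
    ((real \<Rightarrow> real) \<times> (real \<Rightarrow> real) \<times> real measure \<times> real measure) set" where
  "D0_set \<alpha> = {D. \<exists>X\<in>Fi_set \<alpha>. M_rel X D}"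

end

theory Submission
  imports Defs "HOL-Probability.Distribution_Functions"
begin

locale nusetup = finite_borel_measure nu for nu :: "real measure"
begin

definition Fc :: "real \<Rightarrow> real" where "Fc x = x + measure nu {..x}"
definition yy :: "real \<Rightarrow> real" where "yy \<xi> = Inf {x. \<xi> \<le> Fc x}"

lemma Fc_mono: "a \<le> b \<Longrightarrow> Fc a \<le> Fc b"
  unfolding Fc_def using cdf_nondecreasing[of a b] by (simp add: cdf_def)

lemma Fc_ge: "x \<le> Fc x" unfolding Fc_def by simp

lemma Fc_le: "Fc x \<le> x + measure nu UNIV"
  unfolding Fc_def using bounded_measure[of "{..x}"] by (simp add: borel_UNIV)

lemma Fc_right: "continuous (at_right a) Fc"
proof -
  have "continuous (at_right a) (\<lambda>x. x + cdf nu x)"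
    by (intro continuous_intros cdf_is_right_cont)
  then show ?thesis by (simp add: Fc_def[abs_def] cdf_def)
qed

lemma set_ne: "{x. \<xi> \<le> Fc x} \<noteq> {}"
  using Fc_ge[of \<xi>] by auto

lemma set_bdd: "bdd_below {x. \<xi> \<le> Fc x}"
proof -
  have "\<xi> - measure nu UNIV \<le> x" if "\<xi> \<le> Fc x" for x using Fc_le[of x] that by linarith
  then show ?thesis unfolding bdd_below_def by blast
qed

lemma Fc_yy: "\<xi> \<le> Fc (yy \<xi>)"
proof (rule ccontr)
  assume "\<not> \<xi> \<le> Fc (yy \<xi>)"
  hence lt: "Fc (yy \<xi>) < \<xi>" by simp
  have "(Fc \<longlongrightarrow> Fc (yy \<xi>)) (at_right (yy \<xi>))"
    using Fc_right[of "yy \<xi>"] by (simp add: continuous_within)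
  then have ev: "\<forall>\<^sub>F x in at_right (yy \<xi>). Fc x < \<xi>"
    using lt by (rule order_tendstoD(2))
  obtain d where d: "d > yy \<xi>" "\<And>x. yy \<xi> < x \<Longrightarrow> x < d \<Longrightarrow> Fc x < \<xi>"
    using ev unfolding eventually_at_right[of "yy \<xi>" "yy \<xi> + 1", OF less_add_one] by blast
  have "Inf {x. \<xi> \<le> Fc x} < d" using d(1) unfolding yy_def .
  then obtain x where x: "x \<in> {x. \<xi> \<le> Fc x}" "x < d"
    using cInf_lessD[OF set_ne[of \<xi>]] by blast
  have "yy \<xi> \<le> x" unfolding yy_def using x(1) set_bdd by (intro cInf_lower) auto
  show False
  proof (cases "yy \<xi> = x")
    case True then show ?thesis using x lt by simp
  next
    case False then show ?thesis using d(2)[of x] x \<open>yy \<xi> \<le> x\<close> by simp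
  qed
qed


lemma galois: "yy \<xi> \<le> x \<longleftrightarrow> \<xi> \<le> Fc x"
proof
  assume "yy \<xi> \<le> x" then show "\<xi> \<le> Fc x" using Fc_yy[of \<xi>] Fc_mono by (meson order_trans)
next
  assume "\<xi> \<le> Fc x" then show "yy \<xi> \<le> x" unfolding yy_def using set_bdd by (intro cInf_lower) auto
qed

lemma yy_mono: "a \<le> b \<Longrightarrow> yy a \<le> yy b"
  using galois Fc_yy by (meson order_trans)

lemma yy_le: "yy \<xi> \<le> \<xi>" using galois Fc_ge by blast

lemma yy_ge: "\<xi> - measure nu UNIV \<le> yy \<xi>"
  using Fc_yy[of \<xi>] Fc_le[of "yy \<xi>"] by simp

lemma yy_lip: "a \<le> b \<Longrightarrow> yy b - yy a \<le> b - a"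
proof -
  assume ab: "a \<le> b"
  have "Fc (yy a + (b - a)) \<ge> Fc (yy a) + (b - a)"
    unfolding Fc_def using cdf_nondecreasing[of "yy a" "yy a + (b - a)"] ab by (simp add: cdf_def)
  then have "b \<le> Fc (yy a + (b - a))" using Fc_yy[of a] by simp
  then have "yy b \<le> yy a + (b - a)" using galois by blast
  then show ?thesis by simp
qed

lemma yy_lipschitz: "1-lipschitz_on UNIV yy"
proof (rule lipschitz_onI)
  fix x z :: real
  show "dist (yy x) (yy z) \<le> 1 * dist x z"
    using yy_lip[of x z] yy_lip[of z x] yy_mono[of x z] yy_mono[of z x]
    by (cases "x \<le> z") (auto simp: dist_real_def)
qed simp

lemma yy_cont: "continuous_on UNIV yy"
  using yy_lipschitz lipschitz_on_continuous_on by blast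

lemma yy_meas[measurable]: "yy \<in> borel_measurable borel"
  using yy_cont by (rule borel_measurable_continuous_onI)

lemma H_bounds: "0 \<le> \<xi> - yy \<xi>" "\<xi> - yy \<xi> \<le> measure nu {..yy \<xi>}"
  using yy_le[of \<xi>] Fc_yy[of \<xi>] by (auto simp: Fc_def)

lemma vimage_atMost: "yy -` {..x} = {..Fc x}"
  using galois by auto

lemma vimage_Ioc: "yy -` {a<..b} = {Fc a<..Fc b}"
proof -
  have "\<And>\<xi> x. x < yy \<xi> \<longleftrightarrow> Fc x < \<xi>" using galois by (meson not_le)
  then show ?thesis using galois by auto
qed

end

context nusetup
begin

definition S :: "real measure" where
  "S = measure_of UNIV (sets borel) (\<lambda>A. emeasure lborel A + emeasure nu A)"

lemma sets_S[simp]: "sets S = sets borel"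
  unfolding S_def using sets.sigma_sets_eq[of borel] by (simp add: sets_measure_of_conv)

lemma space_S[simp]: "space S = UNIV"
  unfolding S_def by simp

lemma emeasure_S: "A \<in> sets borel \<Longrightarrow> emeasure S A = emeasure lborel A + emeasure nu A"
  unfolding S_def
proof (rule emeasure_measure_of_sigma)
  show "sigma_algebra UNIV (sets borel)"
    using sets.sigma_algebra_axioms[of borel] by simp
  show "positive (sets borel) (\<lambda>A. emeasure lborel A + emeasure nu A)"
    by (simp add: positive_def)
  show "countably_additive (sets borel) (\<lambda>A. emeasure lborel A + emeasure nu A)"
    unfolding countably_additive_def
  proof (intro allI impI)
    fix A :: "nat \<Rightarrow> real set"
    assume A: "range A \<subseteq> sets borel" "disjoint_family A" "\<Union> (range A) \<in> sets borel"
    have A': "range A \<subseteq> sets nu" using A(1) M_is_borel by simp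
    have "(\<Sum>i. emeasure lborel (A i) + emeasure nu (A i)) =
          (\<Sum>i. emeasure lborel (A i)) + (\<Sum>i. emeasure nu (A i))"
      by (rule suminf_add[symmetric]) auto
    also have "\<dots> = emeasure lborel (\<Union>i. A i) + emeasure nu (\<Union>i. A i)"
      using suminf_emeasure[of A lborel] suminf_emeasure[OF A' A(2)] A by simp
    finally show "(\<Sum>i. emeasure lborel (A i) + emeasure nu (A i)) =
          emeasure lborel (\<Union> (range A)) + emeasure nu (\<Union> (range A))" .
  qed
qed

lemma nn_integral_S:
  assumes "h \<in> borel_measurable borel"
  shows "integral\<^sup>N S h = integral\<^sup>N lborel h + integral\<^sup>N nu h"
proof -
  have eqS: "(borel_measurable S :: (real \<Rightarrow> ennreal) set) = borel_measurable borel" by (rule measurable_cong_sets) simp_all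
  have eqN: "(borel_measurable nu :: (real \<Rightarrow> ennreal) set) = borel_measurable borel" by (rule measurable_cong_sets) (simp_all add: M_is_borel)
  have hS: "h \<in> borel_measurable S" using assms eqS by (simp only:)
  from hS show ?thesis
  proof induct
    case (cong f g)
    then have "f \<in> borel_measurable borel" "g \<in> borel_measurable borel"
      using eqS by (simp_all only:)
    moreover have "f = g" using cong by auto
    ultimately show ?case using cong by simp
  next
    case (set A)
    then have "A \<in> sets borel" "A \<in> sets nu" using M_is_borel by auto
    then show ?case using set by (simp add: emeasure_S)
  next
    case (mult u c)
    then have "u \<in> borel_measurable borel" "u \<in> borel_measurable nu"
      using eqS eqN by (simp_all only:)
    then show ?case using mult by (simp add: nn_integral_cmult distrib_left)
  next
    case (add u v)
    then have "u \<in> borel_measurable borel" "u \<in> borel_measurable nu" "v \<in> borel_measurable borel" "v \<in> borel_measurable nu"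
      using eqS eqN by (simp_all only:)
    then show ?case using add by (simp add: nn_integral_add)
  next
    case (seq U)
    then have m: "\<And>i. U i \<in> borel_measurable borel" "\<And>i. U i \<in> borel_measurable nu"
      using eqS eqN by (simp_all only:)
    have e: "(SUP i. U i) = (\<lambda>x. SUP i. U i x)" by (rule ext) (simp add: SUP_apply image_image)
    have inc: "\<And>M. incseq (\<lambda>i. integral\<^sup>N M (U i))"
      using seq(4) unfolding incseq_def le_fun_def by (auto intro!: nn_integral_mono)
    have "integral\<^sup>N S (SUP i. U i) = (SUP i. integral\<^sup>N S (U i))"
      unfolding e using seq(4) seq(1) by (rule nn_integral_monotone_convergence_SUP)
    also have "\<dots> = (SUP i. integral\<^sup>N lborel (U i) + integral\<^sup>N nu (U i))"
      using seq(3) by simp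
    also have "\<dots> = (SUP i. integral\<^sup>N lborel (U i)) + (SUP i. integral\<^sup>N nu (U i))"
      using inc by (intro ennreal_SUP_add)
    also have "\<dots> = integral\<^sup>N lborel (SUP i. U i) + integral\<^sup>N nu (SUP i. U i)"
      unfolding e using seq(4) m
      by (simp add: nn_integral_monotone_convergence_SUP)
    finally show ?case .
  qed
qed

lemma distr_yy: "distr lborel borel yy = S"
proof (rule measure_eqI_generator_eq_countable[where E="range (\<lambda>(a, b). {a<..b::real})"
      and \<Omega>=UNIV and A="range (\<lambda>n::nat. {- real n<..real n})"])
  show "Int_stable (range (\<lambda>(a, b). {a<..b::real}))"
  proof (unfold Int_stable_def, safe)
    fix a b c d :: real
    have "{a<..b} \<inter> {c<..d} = {max a c<..min b d}" by auto
    then show "{a<..b} \<inter> {c<..d} \<in> range (\<lambda>(a, b). {a<..b})" by blast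
  qed
  show "range (\<lambda>(a, b). {a<..b::real}) \<subseteq> Pow UNIV" by simp
  have sb: "sets borel = sigma_sets UNIV (range (\<lambda>(a, b). {a<..b::real}))"
    by (subst borel_sigma_sets_Ioc) (simp add: sets_measure_of_conv)
  show "sets (distr lborel borel yy) = sigma_sets UNIV (range (\<lambda>(a, b). {a<..b::real}))"
    using sb by simp
  show "sets S = sigma_sets UNIV (range (\<lambda>(a, b). {a<..b::real}))" using sb by simp
  show "range (\<lambda>n::nat. {- real n<..real n}) \<subseteq> range (\<lambda>(a, b). {a<..b::real})" by auto
  show "\<Union> (range (\<lambda>n::nat. {- real n<..real n})) = UNIV"
  proof (safe)
    fix x :: real
    obtain n :: nat where "\<bar>x\<bar> < real n" using reals_Archimedean2 by blast
    then show "x \<in> \<Union> (range (\<lambda>n::nat. {- real n<..real n}))" by (intro UN_I[of n]) auto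
  qed simp
  show "countable (range (\<lambda>n::nat. {- real n<..real n}))" by simp
  fix X assume "X \<in> range (\<lambda>(a, b). {a<..b::real})"
  then obtain a b where X: "X = {a<..b}" by auto
  show "emeasure (distr lborel borel yy) X = emeasure S X"
  proof (cases "a \<le> b")
    case True
    have "emeasure (distr lborel borel yy) X = emeasure lborel {Fc a<..Fc b}"
      by (simp add: emeasure_distr X vimage_Ioc)
    also have "\<dots> = ennreal (Fc b - Fc a)" using Fc_mono[OF True] by simp
    also have "Fc b - Fc a = (b - a) + measure nu {a<..b}"
    proof (cases "a = b")
      case True then show ?thesis by simp
    next
      case False
      then show ?thesis using cdf_diff_eq[of a b] True by (simp add: Fc_def cdf_def)
    qed
    also have "ennreal \<dots> = emeasure lborel X + emeasure nu X"
      using True by (simp add: X emeasure_eq_measure ennreal_plus)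
    finally show ?thesis by (simp add: emeasure_S X)
  next
    case False then show ?thesis by (simp add: X emeasure_S)
  qed
next
  fix X assume "X \<in> range (\<lambda>n::nat. {- real n<..real n})"
  then obtain n where X: "X = {- real n<..real n}" by auto
  have "emeasure nu X < \<infinity>" by (simp add: emeasure_eq_measure)
  then show "emeasure (distr lborel borel yy) X \<noteq> \<infinity>"
    using Fc_mono[of "- real n" "real n"] by (simp add: emeasure_distr X vimage_Ioc)
qed

lemma nn_integral_yy:
  assumes "h \<in> borel_measurable borel"
  shows "(\<integral>\<^sup>+ \<xi>. h (yy \<xi>) \<partial>lborel) = integral\<^sup>N lborel h + integral\<^sup>N nu h"
proof -
  have "(\<integral>\<^sup>+ \<xi>. h (yy \<xi>) \<partial>lborel) = integral\<^sup>N (distr lborel borel yy) h"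
    using assms by (subst nn_integral_distr) auto
  also have "\<dots> = integral\<^sup>N lborel h + integral\<^sup>N nu h"
    using nn_integral_S[OF assms] distr_yy by simp
  finally show ?thesis .
qed

lemma emeasure_yy_vimage:
  assumes "A \<in> sets borel"
  shows "emeasure lborel (yy -` A) = emeasure lborel A + emeasure nu A"
proof -
  have "emeasure lborel (yy -` A) = emeasure (distr lborel borel yy) A"
    using assms by (simp add: emeasure_distr)
  then show ?thesis using distr_yy emeasure_S[OF assms] by simp
qed

end

locale setup2 = nusetup nu for nu :: "real measure" +
  fixes ux rho :: "real \<Rightarrow> real" and N :: "real set"
  assumes ux_meas[measurable]: "ux \<in> borel_measurable borel"
    and rho_meas[measurable]: "rho \<in> borel_measurable borel"
    and N_sets[measurable]: "N \<in> sets borel"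
    and N_null: "emeasure lborel N = 0"
    and ac: "\<And>A. A \<in> sets borel \<Longrightarrow>
        emeasure nu (A - N) = (\<integral>\<^sup>+x. ennreal ((ux x)\<^sup>2 + (rho x)\<^sup>2) * indicator A x \<partial>lborel)"
begin

lemma meas_nu[measurable_cong]: "sets nu = sets borel" by (rule M_is_borel)

definition ff :: "real \<Rightarrow> real" where "ff x = (ux x)\<^sup>2 + (rho x)\<^sup>2"
definition GG :: "real \<Rightarrow> real" where "GG x = (if x \<in> N then 0 else 1 / (1 + ff x))"
definition gg :: "real \<Rightarrow> real" where "gg \<xi> = GG (yy \<xi>)"

lemma ff_nonneg: "0 \<le> ff x" unfolding ff_def by simp

lemma ff_meas[measurable]: "ff \<in> borel_measurable borel" unfolding ff_def[abs_def] by measurable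
lemma GG_meas[measurable]: "GG \<in> borel_measurable borel" unfolding GG_def[abs_def] by measurable
lemma gg_meas[measurable]: "gg \<in> borel_measurable borel" unfolding gg_def[abs_def] by measurable

lemma GG_bounds: "0 \<le> GG x" "GG x \<le> 1"
  unfolding GG_def using ff_nonneg[of x] by auto

lemma gg_bounds: "0 \<le> gg x" "gg x \<le> 1" unfolding gg_def using GG_bounds by auto

lemma AE_notN: "AE x in lborel. x \<notin> N"
  using N_null by (intro AE_not_in) (simp add: null_sets_def)

lemma density_nu_offN: "density nu (indicator (- N)) = density lborel (\<lambda>x. ennreal (ff x))"
proof (rule measure_eqI)
  show "sets (density nu (indicator (- N))) = sets (density lborel (\<lambda>x. ennreal (ff x)))"
    by (simp add: M_is_borel)
  fix A assume "A \<in> sets (density nu (indicator (- N)))"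
  then have A[measurable]: "A \<in> sets borel" by (simp add: M_is_borel)
  have "emeasure (density nu (indicator (- N))) A = (\<integral>\<^sup>+ x. indicator (- N) x * indicator A x \<partial>nu)"
    by (subst emeasure_density) auto
  also have "\<dots> = (\<integral>\<^sup>+ x. indicator (A - N) x \<partial>nu)"
    by (rule nn_integral_cong) (auto split: split_indicator)
  also have "\<dots> = emeasure nu (A - N)" using A by (simp add: M_is_borel)
  also have "\<dots> = emeasure (density lborel (\<lambda>x. ennreal (ff x))) A"
    using ac[OF A] by (simp add: emeasure_density ff_def)
  finally show "emeasure (density nu (indicator (- N))) A = emeasure (density lborel (\<lambda>x. ennreal (ff x))) A" .
qed

lemma nu_offN:
  assumes [measurable]: "h \<in> borel_measurable borel"
  shows "(\<integral>\<^sup>+x. indicator (- N) x * h x \<partial>nu) = (\<integral>\<^sup>+x. ennreal (ff x) * h x \<partial>lborel)"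
proof -
  have "(\<integral>\<^sup>+x. indicator (- N) x * h x \<partial>nu) = integral\<^sup>N (density nu (indicator (- N))) h"
    by (subst nn_integral_density) (auto simp: M_is_borel)
  also have "\<dots> = integral\<^sup>N (density lborel (\<lambda>x. ennreal (ff x))) h"
    by (simp add: density_nu_offN)
  also have "\<dots> = (\<integral>\<^sup>+x. ennreal (ff x) * h x \<partial>lborel)"
    by (subst nn_integral_density) auto
  finally show ?thesis .
qed

lemma GG_pt: "x \<notin> N \<Longrightarrow> ennreal (GG x) + ennreal (ff x) * ennreal (GG x) = 1"
proof -
  assume x: "x \<notin> N"
  have "GG x + ff x * GG x = 1" using x ff_nonneg[of x] unfolding GG_def by (simp add: field_simps)
  moreover have "ennreal (GG x) + ennreal (ff x) * ennreal (GG x) = ennreal (GG x + ff x * GG x)"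
    using GG_bounds[of x] ff_nonneg[of x] by (simp add: ennreal_plus ennreal_mult)
  ultimately show ?thesis by simp
qed

lemma GG1_pt: "x \<notin> N \<Longrightarrow> ennreal (1 - GG x) + ennreal (ff x) * ennreal (1 - GG x) = ennreal (ff x)"
proof -
  assume x: "x \<notin> N"
  have p: "1 + ff x > 0" using ff_nonneg[of x] by simp
  have "(1 - GG x) + ff x * (1 - GG x) = (1 - GG x) * (1 + ff x)" by (simp add: algebra_simps)
  also have "\<dots> = ff x" using x p unfolding GG_def by (simp add: field_simps)
  finally have "(1 - GG x) + ff x * (1 - GG x) = ff x" .
  moreover have "ennreal (1 - GG x) + ennreal (ff x) * ennreal (1 - GG x) = ennreal ((1 - GG x) + ff x * (1 - GG x))"
    using GG_bounds[of x] ff_nonneg[of x] by (simp add: ennreal_plus ennreal_mult)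
  ultimately show ?thesis by simp
qed

lemma push_g: "distr (density lborel (\<lambda>\<xi>. ennreal (gg \<xi>))) lborel yy = lborel"
proof (rule measure_eqI)
  show "sets (distr (density lborel (\<lambda>\<xi>. ennreal (gg \<xi>))) lborel yy) = sets lborel" by simp
  fix A assume "A \<in> sets (distr (density lborel (\<lambda>\<xi>. ennreal (gg \<xi>))) lborel yy)"
  then have A[measurable]: "A \<in> sets borel" by simp
  have "emeasure (distr (density lborel (\<lambda>\<xi>. ennreal (gg \<xi>))) lborel yy) A
      = (\<integral>\<^sup>+ \<xi>. ennreal (gg \<xi>) * indicator (yy -` A) \<xi> \<partial>lborel)"
    using measurable_sets_borel[OF yy_meas A] by (subst emeasure_distr) (auto simp: emeasure_density)
  also have "\<dots> = (\<integral>\<^sup>+ \<xi>. (\<lambda>x. ennreal (GG x) * indicator A x) (yy \<xi>) \<partial>lborel)"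
    by (rule nn_integral_cong) (simp add: gg_def indicator_def)
  also have "\<dots> = (\<integral>\<^sup>+ x. ennreal (GG x) * indicator A x \<partial>lborel) + (\<integral>\<^sup>+ x. ennreal (GG x) * indicator A x \<partial>nu)"
    by (rule nn_integral_yy) measurable
  also have "(\<integral>\<^sup>+ x. ennreal (GG x) * indicator A x \<partial>nu) = (\<integral>\<^sup>+ x. indicator (- N) x * (ennreal (GG x) * indicator A x) \<partial>nu)"
    by (rule nn_integral_cong) (simp add: GG_def split: split_indicator)
  also have "\<dots> = (\<integral>\<^sup>+ x. ennreal (ff x) * (ennreal (GG x) * indicator A x) \<partial>lborel)"
    by (rule nu_offN) measurable
  also have "(\<integral>\<^sup>+ x. ennreal (GG x) * indicator A x \<partial>lborel) + \<dots>
      = (\<integral>\<^sup>+ x. ennreal (GG x) * indicator A x + ennreal (ff x) * (ennreal (GG x) * indicator A x) \<partial>lborel)"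
    by (rule nn_integral_add[symmetric]) measurable
  also have "\<dots> = (\<integral>\<^sup>+ x. indicator A x \<partial>lborel)"
  proof (rule nn_integral_cong_AE)
    show "AE x in lborel. ennreal (GG x) * indicator A x + ennreal (ff x) * (ennreal (GG x) * indicator A x) = indicator A x"
      using AE_notN
    proof eventually_elim
      case (elim x)
      then show ?case using GG_pt[of x] by (simp split: split_indicator)
    qed
  qed
  also have "\<dots> = emeasure lborel A" by simp
  finally show "emeasure (distr (density lborel (\<lambda>\<xi>. ennreal (gg \<xi>))) lborel yy) A = emeasure lborel A" .
qed

lemma push_1g: "distr (density lborel (\<lambda>\<xi>. ennreal (1 - gg \<xi>))) lborel yy = nu"
proof (rule measure_eqI)
  show "sets (distr (density lborel (\<lambda>\<xi>. ennreal (1 - gg \<xi>))) lborel yy) = sets nu" by (simp add: M_is_borel)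
  fix A assume "A \<in> sets (distr (density lborel (\<lambda>\<xi>. ennreal (1 - gg \<xi>))) lborel yy)"
  then have A[measurable]: "A \<in> sets borel" by simp
  have "emeasure (distr (density lborel (\<lambda>\<xi>. ennreal (1 - gg \<xi>))) lborel yy) A
      = (\<integral>\<^sup>+ \<xi>. ennreal (1 - gg \<xi>) * indicator (yy -` A) \<xi> \<partial>lborel)"
    using measurable_sets_borel[OF yy_meas A] by (subst emeasure_distr) (auto simp: emeasure_density)
  also have "\<dots> = (\<integral>\<^sup>+ \<xi>. (\<lambda>x. ennreal (1 - GG x) * indicator A x) (yy \<xi>) \<partial>lborel)"
    by (rule nn_integral_cong) (simp add: gg_def indicator_def)
  also have "\<dots> = (\<integral>\<^sup>+ x. ennreal (1 - GG x) * indicator A x \<partial>lborel) + (\<integral>\<^sup>+ x. ennreal (1 - GG x) * indicator A x \<partial>nu)"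
    by (rule nn_integral_yy) measurable
  also have "(\<integral>\<^sup>+ x. ennreal (1 - GG x) * indicator A x \<partial>nu)
      = (\<integral>\<^sup>+ x. indicator (A \<inter> N) x + indicator (- N) x * (ennreal (1 - GG x) * indicator A x) \<partial>nu)"
    by (rule nn_integral_cong) (simp add: GG_def split: split_indicator)
  also have "\<dots> = emeasure nu (A \<inter> N) + (\<integral>\<^sup>+ x. indicator (- N) x * (ennreal (1 - GG x) * indicator A x) \<partial>nu)"
    by (subst nn_integral_add) (auto simp: M_is_borel)
  also have "(\<integral>\<^sup>+ x. indicator (- N) x * (ennreal (1 - GG x) * indicator A x) \<partial>nu)
      = (\<integral>\<^sup>+ x. ennreal (ff x) * (ennreal (1 - GG x) * indicator A x) \<partial>lborel)"
    by (rule nu_offN) measurable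
  also have "(\<integral>\<^sup>+ x. ennreal (1 - GG x) * indicator A x \<partial>lborel) + (emeasure nu (A \<inter> N) + \<dots>)
      = emeasure nu (A \<inter> N) + (\<integral>\<^sup>+ x. ennreal (1 - GG x) * indicator A x + ennreal (ff x) * (ennreal (1 - GG x) * indicator A x) \<partial>lborel)"
    by (subst nn_integral_add) (auto simp: ac_simps)
  also have "(\<integral>\<^sup>+ x. ennreal (1 - GG x) * indicator A x + ennreal (ff x) * (ennreal (1 - GG x) * indicator A x) \<partial>lborel)
      = (\<integral>\<^sup>+ x. ennreal (ff x) * indicator A x \<partial>lborel)"
  proof (rule nn_integral_cong_AE)
    show "AE x in lborel. ennreal (1 - GG x) * indicator A x + ennreal (ff x) * (ennreal (1 - GG x) * indicator A x) = ennreal (ff x) * indicator A x"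
      using AE_notN
    proof eventually_elim
      case (elim x)
      then show ?case using GG1_pt[of x] by (simp split: split_indicator)
    qed
  qed
  also have "\<dots> = emeasure nu (A - N)" using ac[OF A] by (simp add: ff_def)
  also have "emeasure nu (A \<inter> N) + emeasure nu (A - N) = emeasure nu A"
    by (subst plus_emeasure) (auto simp: M_is_borel intro!: arg_cong[where f="emeasure nu"])
  finally show "emeasure (distr (density lborel (\<lambda>\<xi>. ennreal (1 - gg \<xi>))) lborel yy) A = emeasure nu A" .
qed

end

lemma AE_lborel_negligible: "negligible N \<Longrightarrow> AE x in lborel. x \<notin> N"
proof -
  assume "negligible N"
  then have "N \<in> null_sets lebesgue" by (simp add: negligible_iff_null_sets)
  then have "AE x in lebesgue. x \<notin> N" by (rule AE_not_in)
  then show ?thesis by (simp add: AE_completion_iff)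
qed

lemma right_diff_quot:
  fixes F h :: "real \<Rightarrow> real"
  assumes int: "\<And>a b. h integrable_on {a..b}"
    and eqF: "\<And>a b. a \<le> b \<Longrightarrow> F b - F a = integral {a..b} h"
  shows "AE x in lborel. ((\<lambda>s. (F (x + s) - F x) / s) \<longlongrightarrow> h x) (at_right 0)"
proof -
  have "\<And>a b::real. h integrable_on cbox a b" using int by simp
  then obtain N where N: "negligible N"
    "\<And>x e. \<lbrakk>x \<notin> N; 0 < e\<rbrakk> \<Longrightarrow> \<exists>d>0. \<forall>s. 0 < s \<and> s < d \<longrightarrow>
         norm(integral (cbox x (x + s *\<^sub>R One)) h /\<^sub>R s ^ DIM(real) - h x) < e"
    by (rule integrable_ccontinuous_explicit) blast
  show ?thesis using AE_lborel_negligible[OF N(1)]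
  proof eventually_elim
    case (elim x)
    show ?case unfolding tendsto_iff eventually_at_right_field
    proof (intro allI impI)
      fix e :: real assume e: "0 < e"
      obtain d where d: "d > 0" "\<And>s. 0 < s \<Longrightarrow> s < d \<Longrightarrow>
         norm(integral (cbox x (x + s *\<^sub>R One)) h /\<^sub>R s ^ DIM(real) - h x) < e"
        using N(2)[OF elim e] by blast
      show "\<exists>b>0. \<forall>y>0. y < b \<longrightarrow> dist ((F (x + y) - F x) / y) (h x) < e"
      proof (intro exI[of _ d] conjI allI impI)
        fix s :: real assume s: "0 < s" "s < d"
        have "integral (cbox x (x + s *\<^sub>R One)) h = F (x + s) - F x"
          using eqF[of x "x + s"] s by simp
        then show "dist ((F (x + s) - F x) / s) (h x) < e"
          using d(2)[OF s] by (simp add: dist_real_def divide_inverse mult.commute)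
      qed (use d in auto)
    qed
  qed
qed

lemma AE_deriv_of_integral:
  fixes F h :: "real \<Rightarrow> real"
  assumes si: "\<And>a b. a \<le> b \<Longrightarrow> set_integrable lborel {a..b} h"
    and eqF: "\<And>a b. a \<le> b \<Longrightarrow> F b - F a = (LINT x:{a..b}|lborel. h x)"
  shows "AE x in lborel. (F has_real_derivative h x) (at x)"
proof -
  have int: "h integrable_on {a..b}" for a b
    by (cases "a \<le> b") (auto intro: set_borel_integral_eq_integral(1)[OF si])
  have eqF': "F b - F a = integral {a..b} h" if "a \<le> b" for a b
    using eqF[OF that] set_borel_integral_eq_integral(2)[OF si[OF that]] by simp
  have R: "AE x in lborel. ((\<lambda>s. (F (x + s) - F x) / s) \<longlongrightarrow> h x) (at_right 0)"
    by (rule right_diff_quot[OF int eqF'])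
  define F' where "F' = (\<lambda>t. - F (- t))"
  define h' where "h' = (\<lambda>t. h (- t))"
  have int': "h' integrable_on {a..b}" for a b
    unfolding h'_def using int[of "-b" "-a"] Henstock_Kurzweil_Integration.integrable_reflect_real[where f=h and a="-b" and b="-a"] by simp
  have eqF2: "F' b - F' a = integral {a..b} h'" if "a \<le> b" for a b
  proof -
    have "F' b - F' a = F (- a) - F (- b)" by (simp add: F'_def)
    also have "\<dots> = integral {-b..-a} h" using eqF'[of "-b" "-a"] that by simp
    also have "\<dots> = integral {a..b} h'" unfolding h'_def
      using Henstock_Kurzweil_Integration.integral_reflect_real[where f=h and a="-b" and b="-a"] by simp
    finally show ?thesis .
  qed
  have R2: "AE x in lborel. ((\<lambda>s. (F' (x + s) - F' x) / s) \<longlongrightarrow> h' x) (at_right 0)"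
    by (rule right_diff_quot[OF int' eqF2])
  have R2': "AE x in lborel. ((\<lambda>s. (F' (- x + s) - F' (- x)) / s) \<longlongrightarrow> h' (- x)) (at_right 0)"
  proof -
    have "AE x in distr lborel borel uminus. ((\<lambda>s. (F' (x + s) - F' x) / s) \<longlongrightarrow> h' x) (at_right 0)"
      by (subst lborel_distr_uminus) (rule R2)
    then show ?thesis by (rule AE_distrD[rotated]) simp
  qed
  show ?thesis using R R2'
  proof eventually_elim
    case (elim x)
    have L: "((\<lambda>s. (F (x + s) - F x) / s) \<longlongrightarrow> h x) (at_left 0)"
    proof -
      have eq: "(\<lambda>s. (F (x + - s) - F x) / - s) = (\<lambda>s. (F' (- x + s) - F' (- x)) / s)"
        by (rule ext) (simp add: F'_def minus_divide_left)
      have "((\<lambda>s. (F (x + - s) - F x) / - s) \<longlongrightarrow> h x) (at_right (- 0))"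
        unfolding eq using elim(2) by (simp add: h'_def)
      then show ?thesis by (simp add: filterlim_at_left_to_right)
    qed
    show ?case unfolding DERIV_def
      by (rule filterlim_split_at[OF L elim(1)])
  qed
qed

lemma rat_seq:
  fixes s :: real
  assumes "open I" "s \<in> I"
  shows "\<exists>p. (\<forall>n. p n \<in> \<rat> \<and> p n \<in> I) \<and> p \<longlonglongrightarrow> s"
proof -
  obtain d where d: "d > 0" "ball s d \<subseteq> I" using assms open_contains_ball by blast
  have "\<forall>n. \<exists>r. r \<in> \<rat> \<and> s < r \<and> r < s + d / Suc n"
    using Rats_dense_in_real d(1) by (simp add: Bex_def)
  then obtain p where p: "\<And>n. p n \<in> \<rat> \<and> s < p n \<and> p n < s + d / Suc n" by metis
  have "p n \<in> I" for n
  proof -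
    have "d / Suc n \<le> d" using d(1) by (simp add: divide_le_eq)
    then have "dist (p n) s < d" using p[of n] by (simp add: dist_real_def)
    then show ?thesis using d(2) by (auto simp: dist_commute)
  qed
  moreover have "p \<longlonglongrightarrow> s"
  proof (rule tendsto_sandwich[of "\<lambda>n. s" _ _ "\<lambda>n. s + d / Suc n"])
    show "\<forall>\<^sub>F n in sequentially. s \<le> p n" using p by (simp add: less_imp_le)
    show "\<forall>\<^sub>F n in sequentially. p n \<le> s + d / Suc n" using p by (simp add: less_imp_le)
    have "(\<lambda>n. d * inverse (real (Suc n))) \<longlonglongrightarrow> d * 0"
      by (intro tendsto_mult tendsto_const LIMSEQ_inverse_real_of_nat)
    then have "(\<lambda>n. s + d / Suc n) \<longlonglongrightarrow> s + 0"
      by (intro tendsto_add tendsto_const) (simp add: divide_inverse)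
    then show "(\<lambda>n. s + d / Suc n) \<longlonglongrightarrow> s" by simp
  qed simp
  ultimately show ?thesis using p by blast
qed

definition DQ :: "(real \<Rightarrow> real) \<Rightarrow> real \<Rightarrow> real \<Rightarrow> real" where
  "DQ f x s = (f (x + s) - f x) / s"

definition Ccond :: "(real \<Rightarrow> real) \<Rightarrow> real \<Rightarrow> bool" where
  "Ccond f x \<longleftrightarrow> (\<forall>m::nat. \<exists>k::nat. \<forall>p::rat. \<forall>q::rat.
      (0 < \<bar>real_of_rat p\<bar> \<and> \<bar>real_of_rat p\<bar> < 1 / Suc k \<and> 0 < \<bar>real_of_rat q\<bar> \<and> \<bar>real_of_rat q\<bar> < 1 / Suc k)
       \<longrightarrow> \<bar>DQ f x (real_of_rat p) - DQ f x (real_of_rat q)\<bar> \<le> 1 / Suc m)"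

lemma DQ_cont: "continuous_on UNIV f \<Longrightarrow> s \<noteq> 0 \<Longrightarrow> isCont (DQ f x) s"
proof -
  assume cf: "continuous_on UNIV f" and s: "s \<noteq> 0"
  have c1: "isCont (\<lambda>s. x + s) s" by (intro continuous_intros)
  have c2: "isCont f (x + s)" using cf by (simp add: continuous_on_eq_continuous_at)
  have "isCont (\<lambda>s. f (x + s)) s" using isCont_o2[OF c1 c2] by simp
  then show ?thesis unfolding DQ_def[abs_def] using s by (intro continuous_intros) auto
qed

lemma Ccond_real:
  assumes cf: "continuous_on UNIV f" and C: "Ccond f x"
  shows "\<exists>k::nat. \<forall>s t. (0 < \<bar>s\<bar> \<and> \<bar>s\<bar> < 1 / Suc k \<and> 0 < \<bar>t\<bar> \<and> \<bar>t\<bar> < 1 / Suc k)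
       \<longrightarrow> \<bar>DQ f x s - DQ f x t\<bar> \<le> 1 / Suc m"
proof -
  obtain k where k: "\<And>p q::rat. 0 < \<bar>real_of_rat p\<bar> \<Longrightarrow> \<bar>real_of_rat p\<bar> < 1 / Suc k \<Longrightarrow> 0 < \<bar>real_of_rat q\<bar> \<Longrightarrow> \<bar>real_of_rat q\<bar> < 1 / Suc k
       \<Longrightarrow> \<bar>DQ f x (real_of_rat p) - DQ f x (real_of_rat q)\<bar> \<le> 1 / Suc m"
    using C unfolding Ccond_def by blast
  define I where "I = {s::real. 0 < \<bar>s\<bar> \<and> \<bar>s\<bar> < 1 / Suc k}"
  have oI: "open I" unfolding I_def by (intro open_Collect_conj open_Collect_less continuous_intros)
  have kI: "\<bar>DQ f x a - DQ f x b\<bar> \<le> 1 / Suc m" if "a \<in> \<rat>" "b \<in> \<rat>" "a \<in> I" "b \<in> I" for a b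
  proof -
    from that(1) obtain p where "a = of_rat p" by (rule Rats_cases) blast
    moreover from that(2) obtain q where "b = of_rat q" by (rule Rats_cases) blast
    ultimately show ?thesis using k that(3,4) unfolding I_def by blast
  qed
  show ?thesis
  proof (intro exI[of _ k] allI impI)
    fix s t assume st: "0 < \<bar>s\<bar> \<and> \<bar>s\<bar> < 1 / Suc k \<and> 0 < \<bar>t\<bar> \<and> \<bar>t\<bar> < 1 / Suc k"
    then have sI: "s \<in> I" and tI: "t \<in> I" unfolding I_def by auto
    obtain p where p: "\<And>n. p n \<in> \<rat> \<and> p n \<in> I" "p \<longlonglongrightarrow> s" using rat_seq[OF oI sI] by blast
    obtain q where q: "\<And>n. q n \<in> \<rat> \<and> q n \<in> I" "q \<longlonglongrightarrow> t" using rat_seq[OF oI tI] by blast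
    have "(\<lambda>n. DQ f x (p n)) \<longlonglongrightarrow> DQ f x s"
      using DQ_cont[OF cf, of s x] st p(2) isCont_tendsto_compose by fastforce
    moreover have "(\<lambda>n. DQ f x (q n)) \<longlonglongrightarrow> DQ f x t"
      using DQ_cont[OF cf, of t x] st q(2) isCont_tendsto_compose by fastforce
    ultimately have "(\<lambda>n. \<bar>DQ f x (p n) - DQ f x (q n)\<bar>) \<longlonglongrightarrow> \<bar>DQ f x s - DQ f x t\<bar>"
      by (intro tendsto_intros)
    then show "\<bar>DQ f x s - DQ f x t\<bar> \<le> 1 / Suc m"
      by (rule LIMSEQ_le_const2) (use kI p q in auto)
  qed
qed

lemma Ccond_deriv:
  assumes cf: "continuous_on UNIV f" and C: "Ccond f x"
  shows "(f has_real_derivative lim (\<lambda>n. DQ f x (1 / Suc n))) (at x)"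
proof -
  define a where "a = (\<lambda>n. DQ f x (1 / Suc n))"
  have bnd: "\<exists>k::nat. \<forall>s t. (0 < \<bar>s\<bar> \<and> \<bar>s\<bar> < 1 / Suc k \<and> 0 < \<bar>t\<bar> \<and> \<bar>t\<bar> < 1 / Suc k)
       \<longrightarrow> \<bar>DQ f x s - DQ f x t\<bar> \<le> 1 / Suc m" for m
    by (rule Ccond_real[OF cf C])
  have small: "\<exists>m::nat. 1 / Suc m < e" if "e > 0" for e :: real
    using reals_Archimedean[OF that] by (simp add: inverse_eq_divide)
  have inv_lt: "1 / Suc n < 1 / Suc k" if "k < n" for k n :: nat
    using that by (simp add: divide_strict_left_mono)
  have "Cauchy a"
  proof (rule CauchyI)
    fix e :: real assume e: "0 < e"
    obtain m where m: "1 / Suc m < e" using small[OF e] by blast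
    obtain k where k: "\<And>s t. 0 < \<bar>s\<bar> \<and> \<bar>s\<bar> < 1 / Suc k \<and> 0 < \<bar>t\<bar> \<and> \<bar>t\<bar> < 1 / Suc k
       \<Longrightarrow> \<bar>DQ f x s - DQ f x t\<bar> \<le> 1 / Suc m" using bnd[of m] by blast
    show "\<exists>M. \<forall>p\<ge>M. \<forall>q\<ge>M. norm (a p - a q) < e"
    proof (intro exI[of _ "Suc k"] allI impI)
      fix p q :: nat assume pq: "Suc k \<le> p" "Suc k \<le> q"
      have "\<bar>DQ f x (1 / Suc p) - DQ f x (1 / Suc q)\<bar> \<le> 1 / Suc m"
        using pq inv_lt[of k p] inv_lt[of k q] by (intro k) auto
      then show "norm (a p - a q) < e" using m by (simp add: a_def)
    qed
  qed
  then have conv: "a \<longlonglongrightarrow> lim a" by (simp add: Cauchy_convergent_iff convergent_LIMSEQ_iff)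
  have "(DQ f x \<longlongrightarrow> lim a) (at 0)"
    unfolding tendsto_iff eventually_at
  proof (intro allI impI)
    fix e :: real assume e: "0 < e"
    obtain m where m: "1 / Suc m < e / 2" using small[of "e/2"] e by auto
    obtain k where k: "\<And>s t. 0 < \<bar>s\<bar> \<and> \<bar>s\<bar> < 1 / Suc k \<and> 0 < \<bar>t\<bar> \<and> \<bar>t\<bar> < 1 / Suc k
       \<Longrightarrow> \<bar>DQ f x s - DQ f x t\<bar> \<le> 1 / Suc m" using bnd[of m] by blast
    obtain M where M: "\<And>n. n \<ge> M \<Longrightarrow> dist (a n) (lim a) < e / 2"
      using conv e unfolding tendsto_iff eventually_sequentially by (metis half_gt_zero)
    define n where "n = max M (Suc k)"
    have an: "dist (a n) (lim a) < e / 2" using M n_def by simp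
    show "\<exists>d>0. \<forall>y\<in>UNIV. y \<noteq> 0 \<and> dist y 0 < d \<longrightarrow> dist (DQ f x y) (lim a) < e"
    proof (intro exI[of _ "1 / Suc k"] conjI ballI impI)
      fix y :: real assume y: "y \<noteq> 0 \<and> dist y 0 < 1 / Suc k"
      have "\<bar>DQ f x y - a n\<bar> \<le> 1 / Suc m"
        unfolding a_def using y inv_lt[of k n] n_def by (intro k) auto
      moreover have "\<bar>DQ f x y - lim a\<bar> \<le> \<bar>DQ f x y - a n\<bar> + \<bar>a n - lim a\<bar>" by linarith
      ultimately show "dist (DQ f x y) (lim a) < e" using an m by (simp add: dist_real_def)
    qed simp
  qed
  then show ?thesis unfolding DERIV_def a_def DQ_def[abs_def] by simp
qed

lemma deriv_Ccond:
  assumes "(f has_real_derivative L) (at x)"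
  shows "Ccond f x"
  unfolding Ccond_def
proof (intro allI)
  fix m :: nat
  have lim: "(DQ f x \<longlongrightarrow> L) (at 0)" using assms unfolding DERIV_def DQ_def[abs_def] .
  have e: "0 < 1 / (2 * Suc m)" by simp
  obtain d where d: "d > 0" "\<And>y. y \<noteq> 0 \<Longrightarrow> dist y 0 < d \<Longrightarrow> dist (DQ f x y) L < 1 / (2 * Suc m)"
    using lim e unfolding tendsto_iff eventually_at by blast
  obtain k :: nat where k: "inverse (Suc k) < d" using reals_Archimedean[OF d(1)] by blast
  show "\<exists>k::nat. \<forall>p q::rat. 0 < \<bar>real_of_rat p\<bar> \<and> \<bar>real_of_rat p\<bar> < 1 / Suc k \<and> 0 < \<bar>real_of_rat q\<bar> \<and> \<bar>real_of_rat q\<bar> < 1 / Suc k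
       \<longrightarrow> \<bar>DQ f x (real_of_rat p) - DQ f x (real_of_rat q)\<bar> \<le> 1 / Suc m"
  proof (intro exI[of _ k] allI impI)
    fix p q :: rat
    assume pq: "0 < \<bar>real_of_rat p\<bar> \<and> \<bar>real_of_rat p\<bar> < 1 / Suc k \<and> 0 < \<bar>real_of_rat q\<bar> \<and> \<bar>real_of_rat q\<bar> < 1 / Suc k"
    have "dist (DQ f x (real_of_rat p)) L < 1 / (2 * Suc m)"
      using pq k by (intro d(2)) (auto simp: inverse_eq_divide)
    moreover have "dist (DQ f x (real_of_rat q)) L < 1 / (2 * Suc m)"
      using pq k by (intro d(2)) (auto simp: inverse_eq_divide)
    moreover have "\<bar>DQ f x (real_of_rat p) - DQ f x (real_of_rat q)\<bar> \<le>
        \<bar>DQ f x (real_of_rat p) - L\<bar> + \<bar>DQ f x (real_of_rat q) - L\<bar>" by linarith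
    moreover have "2 * (1 / (2 * Suc m)) = 1 / real (Suc m)" by (simp add: field_simps)
    ultimately show "\<bar>DQ f x (real_of_rat p) - DQ f x (real_of_rat q)\<bar> \<le> 1 / Suc m"
      by (simp only: dist_real_def) (smt (verit))
  qed
qed

lemma deriv_formula:
  fixes f :: "real \<Rightarrow> real"
  assumes cf: "continuous_on UNIV f"
  shows "deriv f x = (if Ccond f x then lim (\<lambda>n. DQ f x (1 / Suc n)) else Eps (\<lambda>_. False))"
proof (cases "Ccond f x")
  case True
  then show ?thesis using Ccond_deriv[OF cf True] DERIV_imp_deriv by simp
next
  case False
  then have nd: "\<And>D. \<not> (f has_real_derivative D) (at x)" using deriv_Ccond by blast
  have "(\<lambda>D. (f has_real_derivative D) (at x)) = (\<lambda>_. False)" by (rule ext) (use nd in simp)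
  then show ?thesis using False unfolding deriv_def by simp
qed

lemma borel_deriv:
  fixes f :: "real \<Rightarrow> real"
  assumes cf: "continuous_on UNIV f"
  shows "deriv f \<in> borel_measurable borel"
proof -
  have fm[measurable]: "f \<in> borel_measurable borel" using cf by (rule borel_measurable_continuous_onI)
  have "deriv f = (\<lambda>x. if Ccond f x then lim (\<lambda>n. DQ f x (1 / Suc n)) else Eps (\<lambda>_. False))"
    by (rule ext) (rule deriv_formula[OF cf])
  also have "\<dots> \<in> borel_measurable borel"
    unfolding Ccond_def DQ_def by measurable
  finally show ?thesis .
qed

lemma amgm_abs: "(t::real) > 0 \<Longrightarrow> \<bar>v\<bar> \<le> (1 / t + t * v\<^sup>2) / 2"
proof -
  assume t: "t > 0"
  have "0 \<le> (1 - t * \<bar>v\<bar>)\<^sup>2 / t" using t by simp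
  also have "(1 - t * \<bar>v\<bar>)\<^sup>2 / t = 1 / t - 2 * \<bar>v\<bar> + t * v\<^sup>2"
    using t by (simp add: power2_eq_square field_simps)
  finally show ?thesis by simp
qed

lemma u_est:
  fixes u ux :: "real \<Rightarrow> real"
  assumes si: "set_integrable lborel {a..b} ux" and eq: "u b - u a = (LINT x:{a..b}|lborel. ux x)"
    and sq: "integrable lborel (\<lambda>x. (ux x)\<^sup>2)" and ab: "a \<le> b" and t: "t > 0"
  shows "\<bar>u b - u a\<bar> \<le> ((b - a) / t + t * (LINT x:{a..b}|lborel. (ux x)\<^sup>2)) / 2"
proof -
  have i1: "integrable lborel (\<lambda>x. indicator {a..b} x *\<^sub>R ux x)" using si by (simp add: set_integrable_def)
  have i2: "integrable lborel (\<lambda>x. indicator {a..b} x *\<^sub>R (ux x)\<^sup>2)"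
    by (rule integrable_mult_indicator) (auto simp: sq)
  have i3: "integrable lborel (\<lambda>x. indicator {a..b} x :: real)"
    using ab by (intro integrable_real_indicator) auto
  have "\<bar>u b - u a\<bar> = norm (\<integral>x. indicator {a..b} x *\<^sub>R ux x \<partial>lborel)"
    using eq by (simp add: set_lebesgue_integral_def)
  also have "\<dots> \<le> (\<integral>x. (1 / (2 * t)) * indicator {a..b} x + (t / 2) * (indicator {a..b} x *\<^sub>R (ux x)\<^sup>2) \<partial>lborel)"
  proof (rule Bochner_Integration.integral_norm_bound_integral)
    show "integrable lborel (\<lambda>x. indicator {a..b} x *\<^sub>R ux x)" by (rule i1)
    show "integrable lborel (\<lambda>x. (1 / (2 * t)) * indicator {a..b} x + (t / 2) * (indicator {a..b} x *\<^sub>R (ux x)\<^sup>2))"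
      using i2 i3 by (auto intro!: Bochner_Integration.integrable_add integrable_mult_right)
    fix x
    show "norm (indicator {a..b} x *\<^sub>R ux x) \<le> (1 / (2 * t)) * indicator {a..b} x + (t / 2) * (indicator {a..b} x *\<^sub>R (ux x)\<^sup>2)"
      using amgm_abs[OF t, of "ux x"] by (auto split: split_indicator simp: field_simps)
  qed
  also have "\<dots> = (1 / (2 * t)) * (b - a) + (t / 2) * (LINT x:{a..b}|lborel. (ux x)\<^sup>2)"
    using i2 i3 ab by (simp add: set_lebesgue_integral_def)
  also have "\<dots> = ((b - a) / t + t * (LINT x:{a..b}|lborel. (ux x)\<^sup>2)) / 2"
    using t by (simp add: field_simps)
  finally show ?thesis .
qed

locale setup3 = setup2 nu ux rho N for nu ux rho N +
  fixes u :: "real \<Rightarrow> real"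
  assumes u_si: "\<And>a b. a \<le> b \<Longrightarrow> set_integrable lborel {a..b} ux"
    and u_eq: "\<And>a b. a \<le> b \<Longrightarrow> u b - u a = (LINT x:{a..b}|lborel. ux x)"
    and ux_sq: "integrable lborel (\<lambda>x. (ux x)\<^sup>2)"
    and u_diff: "\<And>x. x \<notin> N \<Longrightarrow> (u has_real_derivative ux x) (at x)"
begin

definition II :: "real \<Rightarrow> real \<Rightarrow> real" where "II a b = (LINT x:{a..b}|lborel. (ux x)\<^sup>2)"

lemma II_int: "integrable lborel (\<lambda>x. indicator {a..b} x *\<^sub>R (ux x)\<^sup>2)"
  by (rule integrable_mult_indicator) (auto simp: ux_sq)

lemma II_nonneg: "0 \<le> II a b"
  unfolding II_def set_lebesgue_integral_def by (intro integral_nonneg_AE) auto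

lemma II_nn: "ennreal (II a b) = (\<integral>\<^sup>+ x. ennreal ((ux x)\<^sup>2) * indicator {a..b} x \<partial>lborel)"
proof -
  have "(\<integral>\<^sup>+ x. ennreal (indicator {a..b} x *\<^sub>R (ux x)\<^sup>2) \<partial>lborel) = ennreal (II a b)"
    unfolding II_def set_lebesgue_integral_def by (rule nn_integral_eq_integral[OF II_int]) auto
  moreover have "(\<integral>\<^sup>+ x. ennreal (indicator {a..b} x *\<^sub>R (ux x)\<^sup>2) \<partial>lborel)
      = (\<integral>\<^sup>+ x. ennreal ((ux x)\<^sup>2) * indicator {a..b} x \<partial>lborel)"
    by (rule nn_integral_cong) (simp split: split_indicator)
  ultimately show ?thesis by simp
qed

lemma key_K:
  assumes "\<xi> \<le> \<xi>'"
  shows "(yy \<xi>' - yy \<xi>) + II (yy \<xi>) (yy \<xi>') \<le> \<xi>' - \<xi>"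
proof -
  define a b where "a = yy \<xi>" and "b = yy \<xi>'"
  have ab: "a \<le> b" unfolding a_def b_def using yy_mono[OF assms] .
  have "(\<integral>\<^sup>+ x. ennreal ((ux x)\<^sup>2) * indicator {a..b} x \<partial>lborel)
      = (\<integral>\<^sup>+ x. ennreal ((ux x)\<^sup>2) * indicator {a<..<b} x \<partial>lborel)"
  proof (rule nn_integral_cong_AE)
    show "AE x in lborel. ennreal ((ux x)\<^sup>2) * indicator {a..b} x = ennreal ((ux x)\<^sup>2) * indicator {a<..<b} x"
      using AE_lborel_singleton[of a] AE_lborel_singleton[of b]
      by eventually_elim (auto split: split_indicator)
  qed
  also have "\<dots> \<le> (\<integral>\<^sup>+ x. ennreal (ff x) * indicator {a<..<b} x \<partial>lborel)"
    by (intro nn_integral_mono) (auto simp: ff_def split: split_indicator intro!: ennreal_leI)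
  also have "\<dots> = emeasure nu ({a<..<b} - N)" using ac[of "{a<..<b}"] by (simp add: ff_def)
  also have "\<dots> \<le> emeasure nu {a<..<b}" by (intro emeasure_mono) (auto simp: M_is_borel)
  finally have I1: "ennreal (II a b) \<le> emeasure nu {a<..<b}" using II_nn by simp
  have "ennreal ((b - a) + II a b) = emeasure lborel {a<..<b} + ennreal (II a b)"
    using ab II_nonneg[of a b] by (simp add: ennreal_plus)
  also have "\<dots> \<le> emeasure lborel {a<..<b} + emeasure nu {a<..<b}"
    using I1 by (simp add: add_left_mono)
  also have "\<dots> = emeasure lborel (yy -` {a<..<b})"
    by (simp add: emeasure_yy_vimage)
  also have "\<dots> \<le> emeasure lborel {\<xi><..<\<xi>'}"
  proof (rule emeasure_mono)
    show "yy -` {a<..<b} \<subseteq> {\<xi><..<\<xi>'}"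
    proof
      fix \<eta> assume "\<eta> \<in> yy -` {a<..<b}"
      then have "a < yy \<eta>" "yy \<eta> < b" by auto
      then have "\<xi> < \<eta>" "\<eta> < \<xi>'" unfolding a_def b_def using yy_mono by (meson not_le)+
      then show "\<eta> \<in> {\<xi><..<\<xi>'}" by simp
    qed
  qed simp
  also have "\<dots> = ennreal (\<xi>' - \<xi>)" using assms by simp
  finally have "ennreal ((b - a) + II a b) \<le> ennreal (\<xi>' - \<xi>)" .
  then have "(b - a) + II a b \<le> \<xi>' - \<xi>" using assms by (simp add: ennreal_le_iff)
  then show ?thesis unfolding a_def b_def .
qed

definition UU :: "real \<Rightarrow> real" where "UU \<xi> = u (yy \<xi>)"

lemma UU_est_ord:
  assumes "\<xi> \<le> \<xi>'" "t > 0"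
  shows "\<bar>UU \<xi>' - UU \<xi>\<bar> \<le> ((yy \<xi>' - yy \<xi>) / t + t * (\<xi>' - \<xi> - (yy \<xi>' - yy \<xi>))) / 2"
proof -
  have ab: "yy \<xi> \<le> yy \<xi>'" using yy_mono[OF assms(1)] .
  have "\<bar>UU \<xi>' - UU \<xi>\<bar> \<le> ((yy \<xi>' - yy \<xi>) / t + t * II (yy \<xi>) (yy \<xi>')) / 2"
    unfolding UU_def II_def by (rule u_est[OF u_si[OF ab] u_eq[OF ab] ux_sq ab assms(2)])
  also have "\<dots> \<le> ((yy \<xi>' - yy \<xi>) / t + t * (\<xi>' - \<xi> - (yy \<xi>' - yy \<xi>))) / 2"
    using key_K[OF assms(1)] assms(2) by (simp add: divide_right_mono)
  finally show ?thesis .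
qed

lemma UU_est:
  assumes "t > 0"
  shows "\<bar>UU \<xi>' - UU \<xi>\<bar> \<le> (\<bar>yy \<xi>' - yy \<xi>\<bar> / t + t * \<bar>\<xi>' - \<xi>\<bar>) / 2"
proof (cases "\<xi> \<le> \<xi>'")
  case True
  have "yy \<xi> \<le> yy \<xi>'" using yy_mono[OF True] .
  moreover have "0 \<le> yy \<xi>' - yy \<xi>" using calculation by simp
  ultimately show ?thesis using UU_est_ord[OF True assms] True assms
    by (smt (verit, best) divide_right_mono mult_left_mono)
next
  case False
  then have F: "\<xi>' \<le> \<xi>" by simp
  have "yy \<xi>' \<le> yy \<xi>" using yy_mono[OF F] .
  then show ?thesis using UU_est_ord[OF F assms] F assms
    by (smt (verit, best) divide_right_mono mult_left_mono)
qed

lemma UU_lip: "\<bar>UU \<xi>' - UU \<xi>\<bar> \<le> \<bar>\<xi>' - \<xi>\<bar>"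
proof (cases "\<xi> \<le> \<xi>'")
  case True
  show ?thesis using UU_est_ord[OF True, of 1] True by simp
next
  case False
  then have F: "\<xi>' \<le> \<xi>" by simp
  have "\<bar>UU \<xi> - UU \<xi>'\<bar> * 2 \<le> \<xi> - \<xi>'" using UU_est_ord[OF F, of 1] F by simp
  then show ?thesis using F by (smt (verit) abs_minus_commute abs_ge_zero)
qed

end

context setup2
begin

lemma gg_vimage: "A \<in> sets borel \<Longrightarrow> (\<integral>\<^sup>+ \<xi>. ennreal (gg \<xi>) * indicator (yy -` A) \<xi> \<partial>lborel) = emeasure lborel A"
proof -
  assume A[measurable]: "A \<in> sets borel"
  have "emeasure lborel A = emeasure (distr (density lborel (\<lambda>\<xi>. ennreal (gg \<xi>))) lborel yy) A"
    by (simp add: push_g)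
  also have "\<dots> = (\<integral>\<^sup>+ \<xi>. ennreal (gg \<xi>) * indicator (yy -` A) \<xi> \<partial>lborel)"
    using measurable_sets_borel[OF yy_meas A] by (subst emeasure_distr) (auto simp: emeasure_density)
  finally show ?thesis by simp
qed

lemma gg1_vimage: "A \<in> sets borel \<Longrightarrow> (\<integral>\<^sup>+ \<xi>. ennreal (1 - gg \<xi>) * indicator (yy -` A) \<xi> \<partial>lborel) = emeasure nu A"
proof -
  assume A[measurable]: "A \<in> sets borel"
  have "emeasure nu A = emeasure (distr (density lborel (\<lambda>\<xi>. ennreal (1 - gg \<xi>))) lborel yy) A"
    by (simp add: push_1g)
  also have "\<dots> = (\<integral>\<^sup>+ \<xi>. ennreal (1 - gg \<xi>) * indicator (yy -` A) \<xi> \<partial>lborel)"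
    using measurable_sets_borel[OF yy_meas A] by (subst emeasure_distr) (auto simp: emeasure_density)
  finally show ?thesis by simp
qed

lemma gg_si: "set_integrable lborel {a..b} gg"
  unfolding set_integrable_def
proof (rule Bochner_Integration.integrable_bound[where f="\<lambda>x. indicator {a..b} x :: real"])
  show "integrable lborel (\<lambda>x. indicator {a..b} x :: real)"
    by (rule integrable_real_indicator) (use emeasure_lborel_cbox_finite[of a b] in auto)
  show "(\<lambda>x. indicator {a..b} x *\<^sub>R gg x) \<in> borel_measurable lborel" by measurable
  show "AE x in lborel. norm (indicator {a..b} x *\<^sub>R gg x) \<le> norm (indicator {a..b} x :: real)"
    using gg_bounds by (auto split: split_indicator)
qed

lemma yy_int:
  assumes ab: "a \<le> b"
  shows "yy b - yy a = (LINT x:{a..b}|lborel. gg x)"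
proof -
  have le1: "ennreal (yy b - yy a) \<le> (\<integral>\<^sup>+ \<xi>. ennreal (gg \<xi>) * indicator {a..b} \<xi> \<partial>lborel)"
  proof -
    have "ennreal (yy b - yy a) = emeasure lborel {yy a<..<yy b}" using yy_mono[OF ab] by simp
    also have "\<dots> = (\<integral>\<^sup>+ \<xi>. ennreal (gg \<xi>) * indicator (yy -` {yy a<..<yy b}) \<xi> \<partial>lborel)"
      by (simp add: gg_vimage)
    also have "\<dots> \<le> (\<integral>\<^sup>+ \<xi>. ennreal (gg \<xi>) * indicator {a..b} \<xi> \<partial>lborel)"
    proof (rule nn_integral_mono)
      fix \<eta>
      have "\<eta> \<in> {a..b}" if "\<eta> \<in> yy -` {yy a<..<yy b}"
      proof -
        have "yy a < yy \<eta>" "yy \<eta> < yy b" using that by auto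
        then have "a < \<eta>" "\<eta> < b" using yy_mono[of \<eta> a] yy_mono[of b \<eta>] by (meson not_le)+
        then show ?thesis by simp
      qed
      then show "ennreal (gg \<eta>) * indicator (yy -` {yy a<..<yy b}) \<eta> \<le> ennreal (gg \<eta>) * indicator {a..b} \<eta>"
        by (auto split: split_indicator)
    qed
    finally show ?thesis .
  qed
  have le2: "(\<integral>\<^sup>+ \<xi>. ennreal (gg \<xi>) * indicator {a..b} \<xi> \<partial>lborel) \<le> ennreal (yy b - yy a)"
  proof -
    have "(\<integral>\<^sup>+ \<xi>. ennreal (gg \<xi>) * indicator {a..b} \<xi> \<partial>lborel)
        \<le> (\<integral>\<^sup>+ \<xi>. ennreal (gg \<xi>) * indicator (yy -` {yy a..yy b}) \<xi> \<partial>lborel)"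
    proof (rule nn_integral_mono)
      fix \<eta>
      have "\<eta> \<in> {a..b} \<Longrightarrow> \<eta> \<in> yy -` {yy a..yy b}" using yy_mono by auto
      then show "ennreal (gg \<eta>) * indicator {a..b} \<eta> \<le> ennreal (gg \<eta>) * indicator (yy -` {yy a..yy b}) \<eta>"
        by (auto split: split_indicator)
    qed
    also have "\<dots> = emeasure lborel {yy a..yy b}" by (simp add: gg_vimage)
    also have "\<dots> = ennreal (yy b - yy a)" using yy_mono[OF ab] by simp
    finally show ?thesis .
  qed
  have "(\<integral>\<^sup>+ x. ennreal (indicator {a..b} x *\<^sub>R gg x) \<partial>lborel) = ennreal (LINT x:{a..b}|lborel. gg x)"
    unfolding set_lebesgue_integral_def
    by (rule nn_integral_eq_integral[OF gg_si[unfolded set_integrable_def]]) (auto simp: gg_bounds)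
  moreover have "(\<integral>\<^sup>+ x. ennreal (indicator {a..b} x *\<^sub>R gg x) \<partial>lborel) = (\<integral>\<^sup>+ \<xi>. ennreal (gg \<xi>) * indicator {a..b} \<xi> \<partial>lborel)"
    by (rule nn_integral_cong) (simp split: split_indicator)
  ultimately have "ennreal (LINT x:{a..b}|lborel. gg x) = ennreal (yy b - yy a)"
    using le1 le2 by simp
  moreover have "0 \<le> (LINT x:{a..b}|lborel. gg x)"
    unfolding set_lebesgue_integral_def by (intro integral_nonneg_AE) (auto simp: gg_bounds)
  ultimately show ?thesis using yy_mono[OF ab] by (simp add: ennreal_inj)
qed

lemma yy_deriv_AE: "AE \<xi> in lborel. (yy has_real_derivative gg \<xi>) (at \<xi>)"
  by (rule AE_deriv_of_integral[OF gg_si yy_int])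

end

context setup2
begin

lemma GG_id: "GG x * (1 - GG x) = (ux x * GG x)\<^sup>2 + (rho x * GG x)\<^sup>2"
proof (cases "x \<in> N")
  case True then show ?thesis by (simp add: GG_def)
next
  case False
  have p: "1 + ff x > 0" using ff_nonneg[of x] by simp
  have "GG x * (1 - GG x) = ff x / (1 + ff x)\<^sup>2"
    using False p unfolding GG_def by (simp add: field_simps power2_eq_square)
  also have "\<dots> = ff x * (GG x)\<^sup>2" using False p unfolding GG_def by (simp add: power2_eq_square)
  also have "\<dots> = (ux x * GG x)\<^sup>2 + (rho x * GG x)\<^sup>2" unfolding ff_def by (simp add: algebra_simps power2_eq_square)
  finally show ?thesis .
qed

lemma gg_id: "gg \<xi> * (1 - gg \<xi>) = (ux (yy \<xi>) * gg \<xi>)\<^sup>2 + (rho (yy \<xi>) * gg \<xi>)\<^sup>2"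
  unfolding gg_def by (rule GG_id)

lemma gg_prod_le: "gg \<xi> * (1 - gg \<xi>) \<le> 1 - gg \<xi>"
  using gg_bounds[of \<xi>] by (simp add: mult_left_le_one_le)

lemma int_1gg: "integrable lborel (\<lambda>\<xi>. 1 - gg \<xi>)"
proof (rule integrableI_nonneg)
  show "(\<lambda>\<xi>. 1 - gg \<xi>) \<in> borel_measurable lborel" by measurable
  show "AE x in lborel. 0 \<le> 1 - gg x" using gg_bounds by simp
  have "(\<integral>\<^sup>+ \<xi>. ennreal (1 - gg \<xi>) \<partial>lborel) = (\<integral>\<^sup>+ \<xi>. ennreal (1 - gg \<xi>) * indicator (yy -` UNIV) \<xi> \<partial>lborel)"
    by simp
  also have "\<dots> = emeasure nu UNIV" by (rule gg1_vimage) simp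
  also have "\<dots> < \<infinity>" by (simp add: emeasure_eq_measure)
  finally show "(\<integral>\<^sup>+ \<xi>. ennreal (1 - gg \<xi>) \<partial>lborel) < \<infinity>" .
qed

lemma int_bounded_1gg:
  assumes m: "h \<in> borel_measurable borel" and b: "AE \<xi> in lborel. \<bar>h \<xi>\<bar> \<le> 1 - gg \<xi>"
  shows "integrable lborel h"
proof (rule Bochner_Integration.integrable_bound[OF int_1gg])
  show "h \<in> borel_measurable lborel" using m by simp
  show "AE x in lborel. norm (h x) \<le> norm (1 - gg x)" using b
    by eventually_elim (use gg_bounds in auto)
qed

end

context setup3
begin

lemma UU_deriv:
  assumes yd: "(yy has_real_derivative gg \<xi>) (at \<xi>)"
  shows "(UU has_real_derivative ux (yy \<xi>) * gg \<xi>) (at \<xi>)"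
proof (cases "yy \<xi> \<in> N")
  case False
  have "((\<lambda>x. u (yy x)) has_real_derivative ux (yy \<xi>) * gg \<xi>) (at \<xi>)"
    by (rule DERIV_chain'[OF yd u_diff[OF False]])
  then show ?thesis unfolding UU_def[abs_def] .
next
  case True
  then have g0: "gg \<xi> = 0" by (simp add: gg_def GG_def)
  have ylim: "((\<lambda>h. (yy (\<xi> + h) - yy \<xi>) / h) \<longlongrightarrow> 0) (at 0)"
    using yd g0 unfolding DERIV_def by simp
  have "((\<lambda>h. (UU (\<xi> + h) - UU \<xi>) / h) \<longlongrightarrow> 0) (at 0)"
    unfolding tendsto_iff eventually_at
  proof (intro allI impI)
    fix e :: real assume e: "0 < e"
    define t where "t = e / 2"
    define dl where "dl = e * e / 4"
    have t: "t > 0" and dl: "dl > 0" using e by (auto simp: t_def dl_def)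
    obtain d where d: "d > 0" "\<And>h. h \<noteq> 0 \<Longrightarrow> dist h 0 < d \<Longrightarrow> dist ((yy (\<xi> + h) - yy \<xi>) / h) 0 < dl"
      using ylim dl unfolding tendsto_iff eventually_at by blast
    show "\<exists>d>0. \<forall>h\<in>UNIV. h \<noteq> 0 \<and> dist h 0 < d \<longrightarrow> dist ((UU (\<xi> + h) - UU \<xi>) / h) 0 < e"
    proof (intro exI[of _ d] conjI ballI impI)
      fix h :: real assume h: "h \<noteq> 0 \<and> dist h 0 < d"
      have hp: "\<bar>h\<bar> > 0" using h by simp
      have "\<bar>(yy (\<xi> + h) - yy \<xi>) / h\<bar> < dl" using d(2)[of h] h by simp
      then have B: "\<bar>yy (\<xi> + h) - yy \<xi>\<bar> < dl * \<bar>h\<bar>" using hp by (simp add: abs_divide pos_divide_less_eq)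
      have A: "\<bar>UU (\<xi> + h) - UU \<xi>\<bar> \<le> (\<bar>yy (\<xi> + h) - yy \<xi>\<bar> / t + t * \<bar>\<xi> + h - \<xi>\<bar>) / 2"
        by (rule UU_est[OF t])
      have "\<bar>yy (\<xi> + h) - yy \<xi>\<bar> / t < dl * \<bar>h\<bar> / t" using B t by (simp add: divide_strict_right_mono)
      also have "dl * \<bar>h\<bar> / t = (e / 2) * \<bar>h\<bar>" using e by (simp add: dl_def t_def field_simps)
      finally have "\<bar>UU (\<xi> + h) - UU \<xi>\<bar> < ((e / 2) * \<bar>h\<bar> + (e / 2) * \<bar>h\<bar>) / 2"
        using A by (simp add: t_def)
      moreover have "((e / 2) * \<bar>h\<bar> + (e / 2) * \<bar>h\<bar>) / 2 = (e / 2) * \<bar>h\<bar>" by simp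
      moreover have "(e / 2) * \<bar>h\<bar> < e * \<bar>h\<bar>" using hp e by simp
      ultimately have "\<bar>UU (\<xi> + h) - UU \<xi>\<bar> < e * \<bar>h\<bar>" by linarith
      then show "dist ((UU (\<xi> + h) - UU \<xi>) / h) 0 < e" using hp by (simp add: abs_divide pos_divide_less_eq)
    qed (use d in auto)
  qed
  then show ?thesis unfolding DERIV_def using g0 by simp
qed

end

lemma u_cont:
  fixes u ux :: "real \<Rightarrow> real"
  assumes si: "\<And>a b. a \<le> b \<Longrightarrow> set_integrable lborel {a..b} ux"
    and eq: "\<And>a b. a \<le> b \<Longrightarrow> u b - u a = (LINT x:{a..b}|lborel. ux x)"
  shows "continuous_on UNIV u"
proof -
  have "isCont u x" for x
  proof -
    define a b where "a = x - 1" and "b = x + 1"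
    have int: "ux integrable_on {a..b}" using set_borel_integral_eq_integral(1)[OF si[of a b]] by (simp add: a_def b_def)
    have c: "continuous_on {a..b} (\<lambda>y. u a + integral {a..y} ux)"
      by (intro continuous_intros indefinite_integral_continuous_1[OF int])
    have "continuous_on {a..b} u"
    proof (rule continuous_on_eq[OF c])
      fix y assume y: "y \<in> {a..b}"
      then have "u y - u a = integral {a..y} ux"
        using eq[of a y] set_borel_integral_eq_integral(2)[OF si[of a y]] by simp
      then show "u a + integral {a..y} ux = u y" by simp
    qed
    moreover have "x \<in> interior {a..b}" by (simp add: a_def b_def)
    ultimately show ?thesis using continuous_on_interior by blast
  qed
  then show ?thesis by (simp add: continuous_on_eq_continuous_at)
qed

lemma u_bounded:
  fixes u :: "real \<Rightarrow> real"
  assumes eb: "ess_bounded u" and cu: "continuous_on UNIV u"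
  shows "\<forall>x. \<bar>u x\<bar> \<le> (SOME C. AE x in lborel. \<bar>u x\<bar> \<le> C)"
proof
  define C where "C = (SOME C. AE x in lborel. \<bar>u x\<bar> \<le> C)"
  have ae: "AE x in lborel. \<bar>u x\<bar> \<le> C" using eb unfolding ess_bounded_def C_def by (rule someI_ex)
  fix x0
  show "\<bar>u x0\<bar> \<le> (SOME C. AE x in lborel. \<bar>u x\<bar> \<le> C)"
  proof (rule ccontr)
    assume "\<not> \<bar>u x0\<bar> \<le> (SOME C. AE x in lborel. \<bar>u x\<bar> \<le> C)"
    then have x0: "x0 \<in> {x. C < \<bar>u x\<bar>}" unfolding C_def by simp
    have "open {x. C < \<bar>u x\<bar>}"
      using cu by (intro open_Collect_less continuous_intros) auto
    then obtain d where d: "d > 0" "ball x0 d \<subseteq> {x. C < \<bar>u x\<bar>}" using x0 open_contains_ball by blast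
    from ae obtain N' where N': "{x \<in> space lborel. \<not> \<bar>u x\<bar> \<le> C} \<subseteq> N'" "emeasure lborel N' = 0" "N' \<in> sets lborel"
      by (rule AE_E)
    have "{x0 - d<..<x0 + d} \<subseteq> N'"
    proof
      fix x assume "x \<in> {x0 - d<..<x0 + d}"
      then have "x \<in> ball x0 d" by (auto simp: dist_real_def)
      then have "C < \<bar>u x\<bar>" using d(2) by blast
      then show "x \<in> N'" using N'(1) by force
    qed
    then have "emeasure lborel {x0 - d<..<x0 + d} \<le> emeasure lborel N'" using N'(3) by (rule emeasure_mono)
    then show False using N'(2) d(1) by simp
  qed
qed

lemma u_bounded_range:
  fixes u :: "real \<Rightarrow> real"
  assumes eb: "ess_bounded u" and cu: "continuous_on UNIV u"
  shows "bounded (range u)"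
  using u_bounded[OF eb cu] unfolding bounded_iff by auto

context setup3
begin

definition HH :: "real \<Rightarrow> real" where "HH \<xi> = \<xi> - yy \<xi>"
definition Ym :: "real \<Rightarrow> real" where "Ym \<xi> = yy \<xi> - \<xi>"
definition rr :: "real \<Rightarrow> real" where "rr \<xi> = rho (yy \<xi>) * gg \<xi>"

lemma HH_fun: "HH = (\<lambda>\<xi>. \<xi> - yy \<xi>)" by (rule ext) (simp add: HH_def)
lemma Ym_fun: "Ym = (\<lambda>\<xi>. yy \<xi> - \<xi>)" by (rule ext) (simp add: Ym_def)

lemma cont_HH: "continuous_on UNIV HH" unfolding HH_fun by (intro continuous_intros yy_cont)
lemma cont_Ym: "continuous_on UNIV Ym" unfolding Ym_fun by (intro continuous_intros yy_cont)
lemma lip_UU: "1-lipschitz_on UNIV UU"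
  by (rule lipschitz_onI) (auto simp: dist_real_def UU_lip)
lemma cont_UU: "continuous_on UNIV UU" using lip_UU lipschitz_on_continuous_on by blast

lemma AE_all: "AE \<xi> in lborel. deriv yy \<xi> = gg \<xi> \<and> deriv HH \<xi> = 1 - gg \<xi> \<and>
    deriv Ym \<xi> = gg \<xi> - 1 \<and> deriv UU \<xi> = ux (yy \<xi>) * gg \<xi>"
  using yy_deriv_AE
proof eventually_elim
  case (elim \<xi>)
  have h: "(HH has_real_derivative 1 - gg \<xi>) (at \<xi>)"
    unfolding HH_fun by (rule DERIV_diff[OF DERIV_ident elim])
  have y: "(Ym has_real_derivative gg \<xi> - 1) (at \<xi>)"
    unfolding Ym_fun by (rule DERIV_diff[OF elim DERIV_ident])
  show ?case using DERIV_imp_deriv[OF elim] DERIV_imp_deriv[OF h] DERIV_imp_deriv[OF y]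
      DERIV_imp_deriv[OF UU_deriv[OF elim]] by simp
qed

lemma sq_le_self: "0 \<le> (a::real) \<Longrightarrow> a \<le> 1 \<Longrightarrow> a\<^sup>2 \<le> a"
  by (simp add: power2_eq_square mult_left_le_one_le)

lemma L2_Ym: "L2 (deriv Ym)"
  unfolding L2_def
proof
  show dm: "deriv Ym \<in> borel_measurable borel" by (rule borel_deriv[OF cont_Ym])
  show "integrable lborel (\<lambda>x. (deriv Ym x)\<^sup>2)"
  proof (rule int_bounded_1gg)
    show "(\<lambda>x. (deriv Ym x)\<^sup>2) \<in> borel_measurable borel" using dm by measurable
    show "AE \<xi> in lborel. \<bar>(deriv Ym \<xi>)\<^sup>2\<bar> \<le> 1 - gg \<xi>" using AE_all
    proof eventually_elim
      case (elim \<xi>)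
      have "(gg \<xi> - 1)\<^sup>2 = (1 - gg \<xi>)\<^sup>2" by (simp add: power2_commute)
      then have "(gg \<xi> - 1)\<^sup>2 \<le> 1 - gg \<xi>" using gg_bounds[of \<xi>] sq_le_self[of "1 - gg \<xi>"] by simp
      then show ?case using elim by simp
    qed
  qed
qed

lemma L2_HH: "L2 (deriv HH)"
  unfolding L2_def
proof
  show dm: "deriv HH \<in> borel_measurable borel" by (rule borel_deriv[OF cont_HH])
  show "integrable lborel (\<lambda>x. (deriv HH x)\<^sup>2)"
  proof (rule int_bounded_1gg)
    show "(\<lambda>x. (deriv HH x)\<^sup>2) \<in> borel_measurable borel" using dm by measurable
    show "AE \<xi> in lborel. \<bar>(deriv HH \<xi>)\<^sup>2\<bar> \<le> 1 - gg \<xi>" using AE_all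
    proof eventually_elim
      case (elim \<xi>)
      have "(1 - gg \<xi>)\<^sup>2 \<le> 1 - gg \<xi>" using gg_bounds[of \<xi>] sq_le_self[of "1 - gg \<xi>"] by simp
      then show ?case using elim by simp
    qed
  qed
qed

lemma L2_UU: "L2 (deriv UU)"
  unfolding L2_def
proof
  show dm: "deriv UU \<in> borel_measurable borel" by (rule borel_deriv[OF cont_UU])
  show "integrable lborel (\<lambda>x. (deriv UU x)\<^sup>2)"
  proof (rule int_bounded_1gg)
    show "(\<lambda>x. (deriv UU x)\<^sup>2) \<in> borel_measurable borel" using dm by measurable
    show "AE \<xi> in lborel. \<bar>(deriv UU \<xi>)\<^sup>2\<bar> \<le> 1 - gg \<xi>" using AE_all
    proof eventually_elim
      case (elim \<xi>)
      have "(ux (yy \<xi>) * gg \<xi>)\<^sup>2 \<le> gg \<xi> * (1 - gg \<xi>)" using gg_id[of \<xi>] by simp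
      then show ?case using elim gg_prod_le[of \<xi>] by simp
    qed
  qed
qed

lemma rr_meas[measurable]: "rr \<in> borel_measurable borel"
  unfolding rr_def[abs_def] by measurable

lemma rr_sq: "(rr \<xi>)\<^sup>2 \<le> 1 - gg \<xi>"
  using gg_id[of \<xi>] gg_prod_le[of \<xi>] unfolding rr_def
  by (smt (verit) zero_le_power2)

lemma L2_rr: "L2 rr"
  unfolding L2_def
  by (auto intro!: int_bounded_1gg simp: rr_sq)

lemma eb_rr: "ess_bounded rr"
  unfolding ess_bounded_def
proof (intro exI[of _ 1] AE_I2)
  fix \<xi>
  have "(rr \<xi>)\<^sup>2 \<le> 1" using rr_sq[of \<xi>] gg_bounds[of \<xi>] by linarith
  then show "\<bar>rr \<xi>\<bar> \<le> 1" by (simp add: abs_square_le_1)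
qed

lemma Ym_bound: "\<bar>Ym \<xi>\<bar> \<le> measure nu UNIV"
  using yy_le[of \<xi>] yy_ge[of \<xi>] by (simp add: Ym_def)

lemma HH_bound: "\<bar>HH \<xi>\<bar> \<le> measure nu UNIV"
  using yy_le[of \<xi>] yy_ge[of \<xi>] by (simp add: HH_def)

lemma lip_aux: "\<bar>(yy x - x) - (yy z - z)\<bar> \<le> \<bar>x - z\<bar>"
proof (cases "z \<le> x")
  case True then show ?thesis using yy_mono[OF True] yy_lip[OF True] by simp
next
  case False then have F: "x \<le> z" by simp
  then show ?thesis using yy_mono[OF F] yy_lip[OF F] by simp
qed

lemma W1_Ym: "W1inf Ym"
  unfolding W1inf_def
proof
  show "bounded (range Ym)" unfolding bounded_iff using Ym_bound by auto
  show "\<exists>L. L-lipschitz_on UNIV Ym"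
    by (rule exI[of _ 1], rule lipschitz_onI) (auto simp: dist_real_def Ym_def lip_aux)
qed

lemma W1_HH: "W1inf HH"
  unfolding W1inf_def
proof
  show "bounded (range HH)" unfolding bounded_iff using HH_bound by auto
  have "\<bar>(x - yy x) - (z - yy z)\<bar> \<le> \<bar>x - z\<bar>" for x z using lip_aux[of x z] by linarith
  then show "\<exists>L. L-lipschitz_on UNIV HH"
    by (intro exI[of _ 1], intro lipschitz_onI) (auto simp: dist_real_def HH_def)
qed

lemma HH_lim: "(HH \<longlongrightarrow> 0) at_bot"
proof (rule tendsto_sandwich[of "\<lambda>_. 0" _ _ "\<lambda>\<xi>. cdf nu (yy \<xi>)"])
  show "\<forall>\<^sub>F n in at_bot. 0 \<le> HH n" using H_bounds by (simp add: HH_def)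
  show "\<forall>\<^sub>F n in at_bot. HH n \<le> cdf nu (yy n)" using H_bounds by (simp add: HH_def cdf_def)
  have "filterlim yy at_bot at_bot"
    unfolding filterlim_at_bot
  proof
    fix Z show "\<forall>\<^sub>F x in at_bot. yy x \<le> Z"
      unfolding eventually_at_bot_linorder using yy_le by (meson order_trans)
  qed
  then show "((\<lambda>\<xi>. cdf nu (yy \<xi>)) \<longlongrightarrow> 0) at_bot"
    using cdf_lim_at_bot by (rule filterlim_compose[rotated])
qed simp

end

context setup3
begin

lemma rho_ident:
  assumes A[measurable]: "A \<in> sets borel"
  shows "(LINT x:A|lborel. rho x) = (LINT \<xi>:(yy -` A)|lborel. rr \<xi>)"
proof -
  have "(LINT \<xi>:(yy -` A)|lborel. rr \<xi>) = (\<integral>\<xi>. gg \<xi> *\<^sub>R (indicator A (yy \<xi>) * rho (yy \<xi>)) \<partial>lborel)"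
    unfolding set_lebesgue_integral_def rr_def
    by (rule Bochner_Integration.integral_cong) (auto split: split_indicator)
  also have "\<dots> = integral\<^sup>L (density lborel (\<lambda>\<xi>. ennreal (gg \<xi>))) (\<lambda>\<xi>. indicator A (yy \<xi>) * rho (yy \<xi>))"
    by (rule integral_density[symmetric]) (auto simp: gg_bounds)
  also have "\<dots> = integral\<^sup>L (distr (density lborel (\<lambda>\<xi>. ennreal (gg \<xi>))) lborel yy) (\<lambda>x. indicator A x * rho x)"
    by (rule integral_distr[symmetric]) auto
  also have "\<dots> = (LINT x:A|lborel. rho x)"
    unfolding push_g set_lebesgue_integral_def by simp
  finally show ?thesis by simp
qed

lemma nu_ident: "nu = distr (density lborel (\<lambda>\<xi>. ennreal (deriv HH \<xi>))) lborel yy"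
proof -
  have dm: "deriv HH \<in> borel_measurable borel" by (rule borel_deriv[OF cont_HH])
  have "density lborel (\<lambda>\<xi>. ennreal (deriv HH \<xi>)) = density lborel (\<lambda>\<xi>. ennreal (1 - gg \<xi>))"
  proof (rule density_cong)
    show "(\<lambda>\<xi>. ennreal (deriv HH \<xi>)) \<in> borel_measurable lborel" using dm by measurable
    show "(\<lambda>\<xi>. ennreal (1 - gg \<xi>)) \<in> borel_measurable lborel" by measurable
    show "AE \<xi> in lborel. ennreal (deriv HH \<xi>) = ennreal (1 - gg \<xi>)"
      using AE_all by eventually_elim simp
  qed
  then show ?thesis using push_1g by simp
qed

lemma in_F:
  assumes ub: "bounded (range u)"
    and a1: "alpha_eq1 \<alpha> \<longrightarrow> emeasure nu N = 0"
  shows "(yy, UU, HH, rr, HH) \<in> F_set \<alpha>"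
proof -
  have bU: "bounded (range UU)"
    using ub unfolding bounded_iff UU_def by auto
  have E2Y: "E2 (\<lambda>\<xi>. yy \<xi> - \<xi>)"
    unfolding E2_def Ym_fun[symmetric] using W1_Ym L2_Ym by (simp add: W1inf_def)
  have E2U: "E2 UU" unfolding E2_def using bU L2_UU by simp
  have E1H: "E1 HH" unfolding E1_def E2_def using W1_HH L2_HH HH_lim by (simp add: W1inf_def)
  have W1Y: "W1inf (\<lambda>\<xi>. yy \<xi> - \<xi>)" using W1_Ym by (simp add: Ym_fun)
  have W1U: "W1inf UU" unfolding W1inf_def using bU lip_UU by blast
  have ae1: "AE \<xi> in lborel. deriv yy \<xi> \<ge> 0 \<and> deriv HH \<xi> \<ge> 0"
    using AE_all by eventually_elim (use gg_bounds in auto)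
  have ae2: "\<exists>c>0. AE \<xi> in lborel. deriv yy \<xi> + deriv HH \<xi> > c"
  proof (rule exI[of _ "1/2"], rule conjI)
    show "AE \<xi> in lborel. deriv yy \<xi> + deriv HH \<xi> > 1/2"
      using AE_all by eventually_elim simp
  qed simp
  have ae3: "AE \<xi> in lborel. deriv yy \<xi> * deriv HH \<xi> = (deriv UU \<xi>)\<^sup>2 + (rr \<xi>)\<^sup>2"
    using AE_all by eventually_elim (simp add: gg_id rr_def)
  have ae4: "AE \<xi> in lborel. 0 \<le> deriv HH \<xi> \<and> deriv HH \<xi> \<le> deriv HH \<xi>"
    using AE_all by eventually_elim (use gg_bounds in auto)
  have c5: "alpha_lt1 \<alpha> \<longrightarrow> (\<exists>\<kappa>::real \<Rightarrow> real. (\<forall>x. 0 < \<kappa> x \<and> \<kappa> x \<le> 1) \<and>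
          (AE \<xi> in lborel. deriv HH \<xi> = \<kappa> (yy \<xi>) * deriv HH \<xi> \<and>
                ((deriv UU \<xi> < 0 \<or> rr \<xi> \<noteq> 0) \<longrightarrow> \<kappa> (yy \<xi>) = 1)))"
    by (intro impI exI[of _ "\<lambda>_. 1"]) auto
  have c6: "alpha_eq1 \<alpha> \<longrightarrow>
          (AE \<xi> in lborel. (deriv yy \<xi> = 0 \<longrightarrow> deriv HH \<xi> = 0) \<and>
                           (deriv yy \<xi> > 0 \<longrightarrow> deriv HH \<xi> = deriv HH \<xi>))"
  proof
    assume "alpha_eq1 \<alpha>"
    then have nN: "emeasure nu N = 0" using a1 by simp
    have "emeasure lborel (yy -` N) = 0" using emeasure_yy_vimage[OF N_sets] nN N_null by simp
    then have "AE \<xi> in lborel. \<xi> \<notin> yy -` N"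
      using measurable_sets_borel[OF yy_meas N_sets] by (intro AE_not_in) (simp add: null_sets_def)
    then show "AE \<xi> in lborel. (deriv yy \<xi> = 0 \<longrightarrow> deriv HH \<xi> = 0) \<and>
                           (deriv yy \<xi> > 0 \<longrightarrow> deriv HH \<xi> = deriv HH \<xi>)"
      using AE_all
    proof eventually_elim
      case (elim \<xi>)
      have "gg \<xi> > 0" using elim(1) ff_nonneg[of "yy \<xi>"] by (simp add: gg_def GG_def add_pos_nonneg)
      then show ?case using elim(2) by simp
    qed
  qed
  show ?thesis unfolding F_set_def mem_Collect_eq prod.case
    by (intro conjI E2Y E2U E1H L2_rr W1Y W1U W1_HH eb_rr ae1 ae2 ae3 ae4 c5 c6)
qed

lemma in_Fi_M:
  assumes ub: "bounded (range u)"
    and a1: "alpha_eq1 \<alpha> \<longrightarrow> emeasure nu N = 0"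
  shows "(yy, UU, HH, rr, HH) \<in> Fi_set \<alpha> \<and> M_rel (yy, UU, HH, rr, HH) (u, rho, nu, nu)"
  using in_F[OF ub a1] rho_ident nu_ident
  unfolding Fi_set_def M_rel_def by (auto simp: UU_def)

end

lemma construct:
  fixes u ux rho :: "real \<Rightarrow> real" and nu :: "real measure"
  assumes fb: "fin_borel_measure nu" and eb: "ess_bounded u" and hL: "has_L2_deriv u ux"
    and rL: "L2 rho"
    and acp: "ac_part_density nu (\<lambda>x. ennreal ((ux x)\<^sup>2 + (rho x)\<^sup>2))"
    and e1: "alpha_eq1 \<alpha> \<longrightarrow> (\<exists>g. ac_part_density nu g \<and> nu = density lborel g)"
  shows "\<exists>X\<in>Fi_set \<alpha>. M_rel X (u, rho, nu, nu)"
proof -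
  have fm: "finite_measure nu" and sb: "sets nu = sets borel" using fb unfolding fin_borel_measure_def by auto
  interpret nusetup nu
  proof -
    show "nusetup nu" using fm sb by (intro nusetup.intro finite_borel_measure.intro finite_borel_measure_axioms.intro)
  qed
  have uxm: "ux \<in> borel_measurable borel" and uxsq: "integrable lborel (\<lambda>x. (ux x)\<^sup>2)"
    and si: "\<And>a b. a \<le> b \<Longrightarrow> set_integrable lborel {a..b} ux"
    and eq: "\<And>a b. a \<le> b \<Longrightarrow> u b - u a = (LINT x:{a..b}|lborel. ux x)"
    using hL unfolding has_L2_deriv_def L2_def by auto
  have rhom: "rho \<in> borel_measurable borel" using rL unfolding L2_def by simp
  obtain N0 where N0: "N0 \<in> sets borel" "emeasure lborel N0 = 0"
    "\<And>A. A \<in> sets borel \<Longrightarrow> emeasure nu (A - N0) = (\<integral>\<^sup>+x. ennreal ((ux x)\<^sup>2 + (rho x)\<^sup>2) * indicator A x \<partial>lborel)"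
    using acp unfolding ac_part_density_def by blast
  have aeu: "AE x in lborel. (u has_real_derivative ux x) (at x)"
    by (rule AE_deriv_of_integral[OF si eq])
  from aeu obtain N1 where N1: "{x \<in> space lborel. \<not> (u has_real_derivative ux x) (at x)} \<subseteq> N1"
    "emeasure lborel N1 = 0" "N1 \<in> sets lborel" by (rule AE_E)
  define N where "N = N0 \<union> N1"
  have Nb: "N \<in> sets borel" using N0(1) N1(3) by (simp add: N_def)
  have Nn: "emeasure lborel N = 0"
  proof -
    have "emeasure lborel N \<le> emeasure lborel N0 + emeasure lborel N1"
      unfolding N_def using N0(1) N1(3) by (intro emeasure_subadditive) auto
    then show ?thesis using N0(2) N1(2) by simp
  qed
  have acN: "emeasure nu (A - N) = (\<integral>\<^sup>+x. ennreal ((ux x)\<^sup>2 + (rho x)\<^sup>2) * indicator A x \<partial>lborel)"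
    if A: "A \<in> sets borel" for A
  proof -
    have "A - N = (A - N1) - N0" by (auto simp: N_def)
    then have "emeasure nu (A - N) = (\<integral>\<^sup>+x. ennreal ((ux x)\<^sup>2 + (rho x)\<^sup>2) * indicator (A - N1) x \<partial>lborel)"
      using N0(3)[of "A - N1"] A N1(3) by simp
    also have "\<dots> = (\<integral>\<^sup>+x. ennreal ((ux x)\<^sup>2 + (rho x)\<^sup>2) * indicator A x \<partial>lborel)"
    proof (rule nn_integral_cong_AE)
      have "AE x in lborel. x \<notin> N1" using N1(2,3) by (intro AE_not_in) (simp add: null_sets_def)
      then show "AE x in lborel. ennreal ((ux x)\<^sup>2 + (rho x)\<^sup>2) * indicator (A - N1) x = ennreal ((ux x)\<^sup>2 + (rho x)\<^sup>2) * indicator A x"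
        by eventually_elim (simp split: split_indicator)
    qed
    finally show ?thesis .
  qed
  have udiff: "(u has_real_derivative ux x) (at x)" if "x \<notin> N" for x
    using that N1(1) by (auto simp: N_def)
  interpret S3: setup3 nu ux rho N u
  proof (unfold_locales)
    show "ux \<in> borel_measurable borel" by (rule uxm)
    show "rho \<in> borel_measurable borel" by (rule rhom)
    show "N \<in> sets borel" by (rule Nb)
    show "emeasure lborel N = 0" by (rule Nn)
    show "\<And>A. A \<in> sets borel \<Longrightarrow> emeasure nu (A - N) = (\<integral>\<^sup>+x. ennreal ((ux x)\<^sup>2 + (rho x)\<^sup>2) * indicator A x \<partial>lborel)"
      by (rule acN)
    show "\<And>a b. a \<le> b \<Longrightarrow> set_integrable lborel {a..b} ux" by (rule si)
    show "\<And>a b. a \<le> b \<Longrightarrow> u b - u a = (LINT x:{a..b}|lborel. ux x)" by (rule eq)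
    show "integrable lborel (\<lambda>x. (ux x)\<^sup>2)" by (rule uxsq)
    show "\<And>x. x \<notin> N \<Longrightarrow> (u has_real_derivative ux x) (at x)" by (rule udiff)
  qed
  have ub: "bounded (range u)" by (rule u_bounded_range[OF eb u_cont[OF si eq]])
  have a1: "alpha_eq1 \<alpha> \<longrightarrow> emeasure nu N = 0"
  proof
    assume "alpha_eq1 \<alpha>"
    then obtain g where g: "ac_part_density nu g" "nu = density lborel g" using e1 by blast
    have gm: "g \<in> borel_measurable borel" using g(1) unfolding ac_part_density_def by simp
    have "AE x in lborel. x \<notin> N" using Nn Nb by (intro AE_not_in) (simp add: null_sets_def)
    then have "AE x in lborel. x \<in> N \<longrightarrow> g x = 0" by eventually_elim simp
    then have "N \<in> null_sets (density lborel g)" using Nb gm by (simp add: null_sets_density_iff)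
    from null_setsD1[OF this] show "emeasure nu N = 0" using g(2) by simp
  qed
  show ?thesis using S3.in_Fi_M[OF ub a1] by blast
qed

theorem proposition3p11:
  fixes \<alpha> u \<rho> :: "real \<Rightarrow> real" and \<nu> \<mu> :: "real measure"
  assumes "admissible_alpha \<alpha>"
    and "(u, \<rho>, \<nu>, \<mu>) \<in> D_set \<alpha>"
  shows "(u, \<rho>, \<nu>, \<mu>) \<in> D0_set \<alpha> \<longleftrightarrow> \<nu> = \<mu>"
proof
  assume "(u, \<rho>, \<nu>, \<mu>) \<in> D0_set \<alpha>"
  then obtain X where X: "X \<in> Fi_set \<alpha>" "M_rel X (u, \<rho>, \<nu>, \<mu>)" unfolding D0_set_def by blast
  obtain y U H r V where XX: "X = (y, U, H, r, V)" by (cases X)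
  have "V = H" using X(1) unfolding XX Fi_set_def by simp
  then show "\<nu> = \<mu>" using X(2) unfolding XX M_rel_def by simp
next
  assume eqm: "\<nu> = \<mu>"
  obtain ux where D: "ess_bounded u" "has_L2_deriv u ux" "L2 \<rho>" "fin_borel_measure \<nu>"
      "ac_part_density \<mu> (\<lambda>x. ennreal ((ux x)\<^sup>2 + (\<rho> x)\<^sup>2))"
      "alpha_eq1 \<alpha> \<longrightarrow> (\<exists>g. ac_part_density \<nu> g \<and> \<mu> = density lborel g)"
    using assms(2) unfolding D_set_def by (simp only: mem_Collect_eq prod.case) blast
  have "\<exists>X\<in>Fi_set \<alpha>. M_rel X (u, \<rho>, \<nu>, \<nu>)"
    by (rule construct[OF D(4) D(1) D(2) D(3)]) (use D(5,6) eqm in auto)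
  then show "(u, \<rho>, \<nu>, \<mu>) \<in> D0_set \<alpha>" unfolding D0_set_def using eqm by simp
qed

end
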